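(* Let $\mathcal{X}\subseteq\mathcal{P}(\mathbb{N})$ be closed under enumeration equivalence. If $f\colon\mathcal{X}\to\mathcal{P}(\mathbb{N})$ is uniformly $e$-invariant, then $f$ has a computable uniformity function.
   Context: Enumeration reducibility: for $A,B\subseteq\mathbb{N}$, $A\le_e B$ if $A=\Gamma(B):=\{n:\exists D\subseteq B,\ \langle n,D\rangle\in\Gamma\}$ for some c.e. set $\Gamma$ of pairs $\langle n,D\rangle$ with $D$ finite (canonical index); $(\Gamma_i)_{i\in\mathbb{N}}$ is the standard computable numbering of these enumeration operators. $A\equiv_e B$ iff $A\le_e B\le_e A$. Let $\mathcal{X}\subseteq\mathcal{P}(\mathbb{N})$ be closed under $\equiv_e$. A function $f\colon\mathcal{X}\to\mathcal{P}(\mathbb{N})$ is $e$-invariant if $A\equiv_e B$ implies $f(A)\equiv_e f(B)$. Write $A\equiv_e B$ via $\langle i,j\rangle$ if $\Gamma_i(A)=B$ and $\Gamma_j(B)=A$ (with $\langle\cdot,\cdot\rangle$ a fixed computable pairing bijection). A function $u\colon\mathbb{N}\to\mathbb{N}$ is a uniformity function for $f$ if for all $A,B\in\mathcal{X}$ and all $i,j$, whenever $A\equiv_e B$ via $\langle i,j\rangle$ then $f(A)\equiv_e f(B)$ via $u(\langle i,j\rangle)$. $f$ is uniformly $e$-invariant if it has some uniformity function. *)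

theory Defs
  imports Main "HOL-Library.Nat_Bijection"
begin

datatype recf =
    Z
  | S
  | Id nat
  | Cn recf "recf list"
  | Pr recf recf
  | Mn recf

definition arg :: "nat list \<Rightarrow> nat \<Rightarrow> nat" where
  "arg xs k = (if k < length xs then xs ! k else 0)"

inductive eval :: "recf \<Rightarrow> nat list \<Rightarrow> nat \<Rightarrow> bool" where
  eval_Z: "eval Z xs 0"
| eval_S: "eval S xs (Suc (arg xs 0))"
| eval_Id: "eval (Id k) xs (arg xs k)"
| eval_Cn: "\<lbrakk> length ys = length gs; \<forall>i < length gs. eval (gs ! i) xs (ys ! i); eval f ys y \<rbrakk>
            \<Longrightarrow> eval (Cn f gs) xs y"
| eval_Pr0: "eval f xs y \<Longrightarrow> eval (Pr f g) (0 # xs) y"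
| eval_Pr0_nil: "eval f [] y \<Longrightarrow> eval (Pr f g) [] y"
| eval_PrS: "\<lbrakk> eval (Pr f g) (n # xs) z; eval g (n # z # xs) y \<rbrakk>
            \<Longrightarrow> eval (Pr f g) (Suc n # xs) y"
| eval_Mn: "\<lbrakk> eval f (n # xs) 0; \<forall>m < n. \<exists>y. eval f (m # xs) y \<and> y \<noteq> 0 \<rbrakk>
            \<Longrightarrow> eval (Mn f) xs n"

definition computable :: "(nat \<Rightarrow> nat) \<Rightarrow> bool" where
  "computable u \<longleftrightarrow> (\<exists>r. \<forall>n. eval r [n] (u n))"

fun code :: "recf \<Rightarrow> nat" where
  "code Z = prod_encode (0, 0)"
| "code S = prod_encode (1, 0)"
| "code (Id k) = prod_encode (2, k)"
| "code (Cn f gs) = prod_encode (3, prod_encode (code f, list_encode (map code gs)))"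
| "code (Pr f g) = prod_encode (4, prod_encode (code f, code g))"
| "code (Mn f) = prod_encode (5, code f)"

definition W :: "nat \<Rightarrow> nat set" where
  "W i = (if \<exists>r. code r = i then {n. \<exists>y. eval (THE r. code r = i) [n] y} else {})"

text \<open>Pairing is Cantor pairing prod_encode; finite sets are given by canonical index set_decode.\<close>
definition pair :: "nat \<Rightarrow> nat \<Rightarrow> nat" where
  "pair i j = prod_encode (i, j)"

definition Gamma :: "nat \<Rightarrow> nat set \<Rightarrow> nat set" where
  "Gamma i A = {n. \<exists>d. pair n d \<in> W i \<and> set_decode d \<subseteq> A}"

definition e_reducible :: "nat set \<Rightarrow> nat set \<Rightarrow> bool" where
  "e_reducible A B \<longleftrightarrow> (\<exists>i. A = Gamma i B)"

definition e_equiv :: "nat set \<Rightarrow> nat set \<Rightarrow> bool" where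
  "e_equiv A B \<longleftrightarrow> e_reducible A B \<and> e_reducible B A"

definition e_equiv_via :: "nat set \<Rightarrow> nat set \<Rightarrow> nat \<Rightarrow> bool" where
  "e_equiv_via A B p \<longleftrightarrow> Gamma (fst (prod_decode p)) A = B \<and> Gamma (snd (prod_decode p)) B = A"

definition closed_under_e_equiv :: "nat set set \<Rightarrow> bool" where
  "closed_under_e_equiv X \<longleftrightarrow> (\<forall>A B. A \<in> X \<longrightarrow> e_equiv A B \<longrightarrow> B \<in> X)"

definition uniformity_function :: "nat set set \<Rightarrow> (nat set \<Rightarrow> nat set) \<Rightarrow> (nat \<Rightarrow> nat) \<Rightarrow> bool" where
  "uniformity_function X f u \<longleftrightarrow>
     (\<forall>A \<in> X. \<forall>B \<in> X. \<forall>i j. e_equiv_via A B (pair i j) \<longrightarrow> e_equiv_via (f A) (f B) (u (pair i j)))"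

definition uniformly_e_invariant :: "nat set set \<Rightarrow> (nat set \<Rightarrow> nat set) \<Rightarrow> bool" where
  "uniformly_e_invariant X f \<longleftrightarrow> (\<exists>u. uniformity_function X f u)"

end

theory Submission
  imports Defs
begin

lemma eval_det: "eval r xs y \<Longrightarrow> eval r xs y' \<Longrightarrow> y = y'"
proof (induction arbitrary: y' rule: eval.induct)
  case (eval_Cn ys gs xs f y)
  from eval_Cn.prems obtain ys' where l: "length ys' = length gs"
    and a: "\<forall>i<length gs. eval (gs ! i) xs (ys' ! i)" and b: "eval f ys' y'"
    by (cases rule: eval.cases) auto
  have "ys = ys'"
    by (rule nth_equalityI) (use eval_Cn.hyps(1) eval_Cn.IH(1) l a in auto)
  then show ?case using eval_Cn.IH(2) b by blast
next
  case (eval_Pr0 f xs y g)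
  show ?case using eval_Pr0.prems eval_Pr0.IH by (cases rule: eval.cases) auto
next
  case (eval_Pr0_nil f y g)
  show ?case using eval_Pr0_nil.prems eval_Pr0_nil.IH by (cases rule: eval.cases) auto
next
  case (eval_PrS f g n xs z y)
  from eval_PrS.prems obtain z' where "eval (Pr f g) (n # xs) z'" "eval g (n # z' # xs) y'"
    by (cases rule: eval.cases) auto
  then show ?case using eval_PrS.IH by metis
next
  case (eval_Mn f n xs)
  from eval_Mn.prems have a: "eval f (y' # xs) 0" and b: "\<forall>m<y'. \<exists>y. eval f (m # xs) y \<and> y \<noteq> 0"
    by (cases rule: eval.cases; auto)+
  show ?case
  proof (rule ccontr)
    assume "n \<noteq> y'"
    then consider "n < y'" | "y' < n" by linarith
    then show False
    proof cases
      case 1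
      then obtain y where "eval f (n # xs) y" "y \<noteq> 0" using b by blast
      then show False using eval_Mn.IH(1) by blast
    next
      case 2
      then obtain y where "eval f (y' # xs) y" "y \<noteq> 0" "\<forall>y''. eval f (y' # xs) y'' \<longrightarrow> y = y''"
        using eval_Mn.IH(2) by blast
      then show False using a by blast
    qed
  qed
next
  case (eval_Z xs)
  show ?case using eval_Z.prems by (cases rule: eval.cases) auto
next
  case (eval_S xs)
  show ?case using eval_S.prems by (cases rule: eval.cases) auto
next
  case (eval_Id k xs)
  show ?case using eval_Id.prems by (cases rule: eval.cases) auto
qed


lemma code_inj: "code r1 = code r2 \<Longrightarrow> r1 = r2"
proof (induction r1 arbitrary: r2)
  case Z then show ?case by (cases r2) auto
next
  case S then show ?case by (cases r2) auto
next
  case (Id k) then show ?case by (cases r2) auto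
next
  case (Cn f gs)
  show ?case
  proof (cases r2)
    case (Cn f2 gs2)
    with Cn.prems have "code f = code f2" "map code gs = map code gs2"
      by (auto simp: list_encode_eq)
    then show ?thesis using Cn Cn.IH
      by (metis list.inj_map_strong)
  qed (use Cn.prems in auto)
next
  case (Pr f g) then show ?case by (cases r2) auto
next
  case (Mn f) then show ?case by (cases r2) auto
qed

lemma W_code: "W (code r) = {n. \<exists>y. eval r [n] y}"
proof -
  have "(THE r'. code r' = code r) = r" using code_inj by (auto intro!: the_equality)
  then show ?thesis unfolding W_def by auto
qed

lemma eval_Cn1: "eval g xs a \<Longrightarrow> eval f [a] y \<Longrightarrow> eval (Cn f [g]) xs y"
  by (rule eval_Cn[where ys="[a]"]) auto

lemma eval_Cn2: "eval g1 xs a \<Longrightarrow> eval g2 xs b \<Longrightarrow> eval f [a,b] y \<Longrightarrow> eval (Cn f [g1,g2]) xs y"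
  by (rule eval_Cn[where ys="[a,b]"]) (auto simp: less_Suc_eq nth_Cons')

lemma eval_Pr_rec:
  assumes "eval f xs b" and "\<And>m z. eval g (m # z # xs) (G m z)"
  shows "eval (Pr f g) (n # xs) (rec_nat b G n)"
proof (induction n)
  case 0 then show ?case using assms(1) by (auto intro: eval_Pr0)
next
  case (Suc n) then show ?case using assms(2) by (auto intro: eval_PrS)
qed

lemma eval_IdI: "arg xs k = y \<Longrightarrow> eval (Id k) xs y"
  using eval_Id by metis

lemma eval_SI: "Suc (arg xs 0) = y \<Longrightarrow> eval S xs y"
  using eval_S by metis

lemma eval_ZI: "y = 0 \<Longrightarrow> eval Z xs y"
  using eval_Z by metis

fun cst :: "nat \<Rightarrow> recf" where
  "cst 0 = Z"
| "cst (Suc c) = Cn S [cst c]"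

declare cst.simps[simp del]
lemma eval_cst: "eval (cst c) xs c"
  by (induction c) (auto intro!: eval_Z eval_Cn1 eval_SI simp: arg_def cst.simps)
lemma eval_cstI: "y = c \<Longrightarrow> eval (cst c) xs y"
  using eval_cst by simp

definition "ADD = Pr (Id 0) (Cn S [Id 1])"
lemma eval_ADD: "eval ADD [a,b] (a+b)"
proof -
  have "eval ADD (a # [b]) (rec_nat b (\<lambda>m z. Suc z) a)"
    unfolding ADD_def
    by (rule eval_Pr_rec) (auto intro!: eval_IdI eval_Cn1 eval_SI simp: arg_def)
  moreover have "rec_nat b (\<lambda>m z. Suc z) a = a + b" by (induction a) auto
  ultimately show ?thesis by simp
qed

lemma eval_ADDI: "y = a+b \<Longrightarrow> eval ADD [a,b] y"
  using eval_ADD by simp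

definition "MUL = Pr Z (Cn ADD [Id 1, Id 2])"
lemma eval_MUL: "eval MUL [a,b] (a*b)"
proof -
  have "eval MUL (a # [b]) (rec_nat 0 (\<lambda>m z. z + b) a)"
    unfolding MUL_def
    by (rule eval_Pr_rec) (auto intro!: eval_ZI eval_IdI eval_Cn2 eval_ADDI simp: arg_def)
  moreover have "rec_nat 0 (\<lambda>m z. z + b) a = a * b" by (induction a) auto
  ultimately show ?thesis by simp
qed

definition "PRED = Pr Z (Id 0)"
lemma eval_PRED: "eval PRED [a] (a - 1)"
proof -
  have "eval PRED (a # []) (rec_nat 0 (\<lambda>m z. m) a)"
    unfolding PRED_def
    by (rule eval_Pr_rec) (auto intro!: eval_ZI eval_IdI simp: arg_def)
  moreover have "rec_nat 0 (\<lambda>m z. m) a = a - 1" by (cases a) auto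
  ultimately show ?thesis by simp
qed

lemma eval_PREDI: "y = a - 1 \<Longrightarrow> eval PRED [a] y"
  using eval_PRED by simp

definition "MON = Pr (Id 0) (Cn PRED [Id 1])"
definition "SUB = Cn MON [Id 1, Id 0]"
lemma eval_SUB: "eval SUB [a,b] (a - b)"
proof -
  have "eval MON (b # [a]) (rec_nat a (\<lambda>m z. z - 1) b)"
    unfolding MON_def
    by (rule eval_Pr_rec) (auto intro!: eval_IdI eval_Cn1 eval_PREDI simp: arg_def)
  moreover have "rec_nat a (\<lambda>m z. z - 1) b = a - b" by (induction b) auto
  ultimately show ?thesis unfolding SUB_def
    by (auto intro!: eval_Cn2 eval_IdI simp: arg_def)
qed

definition "SG = Cn SUB [cst 1, Cn SUB [cst 1, Id 0]]"
lemma eval_SG: "eval SG [a] (if a = 0 then 0 else 1)"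
proof -
  have "eval SG [a] (1 - (1 - a))"
    unfolding SG_def
    by (rule eval_Cn2[OF eval_cst eval_Cn2[OF eval_cst eval_IdI]]) (auto intro: eval_SUB simp: arg_def)
  moreover have "1 - (1 - a) = (if a = 0 then 0 else (1::nat))" by auto
  ultimately show ?thesis by simp
qed

definition "POW2 = Pr (cst 1) (Cn ADD [Id 1, Id 1])"
lemma eval_POW2: "eval POW2 [a] (2^a)"
proof -
  have "eval POW2 (a # []) (rec_nat 1 (\<lambda>m z. z + z) a)"
    unfolding POW2_def
    by (rule eval_Pr_rec) (auto intro!: eval_cstI eval_IdI eval_Cn2 eval_ADDI simp: arg_def)
  moreover have "rec_nat 1 (\<lambda>m z. z + z) a = (2::nat)^a" by (induction a) auto
  ultimately show ?thesis by simp
qed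

definition "TRI = Pr Z (Cn ADD [Id 1, Cn S [Id 0]])"
lemma eval_TRI: "eval TRI [a] (triangle a)"
proof -
  have "eval TRI (a # []) (rec_nat 0 (\<lambda>m z. z + Suc m) a)"
    unfolding TRI_def
    by (rule eval_Pr_rec) (auto intro!: eval_ZI eval_IdI eval_Cn2 eval_Cn1 eval_SI eval_ADDI simp: arg_def)
  moreover have "rec_nat 0 (\<lambda>m z. z + Suc m) a = triangle a" by (induction a) auto
  ultimately show ?thesis by simp
qed

definition "PE = Cn ADD [Cn TRI [Cn ADD [Id 0, Id 1]], Id 0]"
lemma eval_PE: "eval PE [a,b] (prod_encode (a,b))"
  unfolding PE_def prod_encode_def
  by (auto intro!: eval_Cn2 eval_Cn1 eval_IdI eval_ADD eval_TRI simp: arg_def)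

definition b2n :: "bool \<Rightarrow> nat" where "b2n P = (if P then 1 else 0)"

lemma eval_SUBI: "y = a - b \<Longrightarrow> eval SUB [a,b] y" using eval_SUB by simp
lemma eval_SGI: "y = (if a = 0 then 0 else 1) \<Longrightarrow> eval SG [a] y" using eval_SG by simp
lemma eval_MULI: "y = a * b \<Longrightarrow> eval MUL [a,b] y" using eval_MUL by simp
lemma eval_POW2I: "y = 2 ^ a \<Longrightarrow> eval POW2 [a] y" using eval_POW2 by simp
lemma eval_PEI: "y = prod_encode (a,b) \<Longrightarrow> eval PE [a,b] y" using eval_PE by simp

definition "EQ = Cn SUB [cst 1, Cn SG [Cn ADD [Cn SUB [Id 0, Id 1], Cn SUB [Id 1, Id 0]]]]"
lemma eval_EQ: "eval EQ [a,b] (b2n (a = b))"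
  unfolding EQ_def b2n_def
  by (rule eval_Cn2[OF eval_cst eval_Cn1[OF eval_Cn2[OF eval_Cn2[OF eval_IdI eval_IdI] eval_Cn2[OF eval_IdI eval_IdI]]]])
     (auto intro!: eval_SUBI eval_SGI eval_ADDI simp: arg_def)

definition "LT = Cn SG [Cn SUB [Id 1, Id 0]]"
lemma eval_LT: "eval LT [a,b] (b2n (a < b))"
  unfolding LT_def b2n_def
  by (rule eval_Cn1[OF eval_Cn2[OF eval_IdI eval_IdI]]) (auto intro!: eval_SUBI eval_SGI simp: arg_def)

definition "NOT = Cn SUB [cst 1, Id 0]"
lemma eval_NOT: "eval NOT [b2n P] (b2n (\<not> P))"
  unfolding NOT_def b2n_def
  by (rule eval_Cn2[OF eval_cst eval_IdI]) (auto intro!: eval_SUBI simp: arg_def)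

definition "OR = Cn SG [Cn ADD [Id 0, Id 1]]"
lemma eval_OR: "eval OR [a,b] (if a + b = 0 then 0 else 1)"
  unfolding OR_def
  by (rule eval_Cn1[OF eval_Cn2[OF eval_IdI eval_IdI]]) (auto intro!: eval_ADDI eval_SGI simp: arg_def)

lemma eval_ORb: "eval OR [b2n P, b2n Q] (b2n (P \<or> Q))"
proof -
  have "b2n (P \<or> Q) = (if b2n P + b2n Q = 0 then 0 else 1)" by (simp add: b2n_def)
  then show ?thesis using eval_OR by simp
qed

lemma eval_AND: "eval MUL [b2n P, b2n Q] (b2n (P \<and> Q))"
proof -
  have "b2n (P \<and> Q) = b2n P * b2n Q" by (simp add: b2n_def)
  then show ?thesis using eval_MUL by simp
qed

lemma code_cst_Suc: "code (cst (Suc c)) = prod_encode (3, prod_encode (code S, Suc (prod_encode (code (cst c), 0))))"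
  by (simp add: cst.simps)

definition "CCP = Pr (cst (code Z)) (Cn PE [cst 3, Cn PE [cst (code S), Cn S [Cn PE [Id 1, Z]]]])"
lemma eval_CCP: "eval CCP [a] (code (cst a))"
proof -
  have "eval CCP (a # []) (rec_nat (code Z) (\<lambda>m z. prod_encode (3, prod_encode (code S, Suc (prod_encode (z, 0))))) a)"
    unfolding CCP_def
    by (rule eval_Pr_rec) (auto intro!: eval_cst eval_Cn2 eval_Cn1 eval_SI eval_PEI eval_IdI eval_ZI simp: arg_def)
  moreover have "rec_nat (code Z) (\<lambda>m z. prod_encode (3, prod_encode (code S, Suc (prod_encode (z, 0))))) a = code (cst a)"
    by (induction a) (auto simp: cst.simps)
  ultimately show ?thesis by simp
qed

datatype tm = V nat | N nat | Sc tm | Pl tm tm | Ml tm tm | P2 tm | Pe tm tm | CC tm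

primrec tv :: "(nat \<Rightarrow> nat) \<Rightarrow> tm \<Rightarrow> nat" where
  "tv s (V x) = s x"
| "tv s (N c) = c"
| "tv s (Sc t) = Suc (tv s t)"
| "tv s (Pl a b) = tv s a + tv s b"
| "tv s (Ml a b) = tv s a * tv s b"
| "tv s (P2 a) = 2 ^ tv s a"
| "tv s (Pe a b) = prod_encode (tv s a, tv s b)"
| "tv s (CC a) = code (cst (tv s a))"

datatype fm = Eq tm tm | Lt tm tm | Neg fm | Cj fm fm | Dj fm fm | BEx nat tm fm

primrec fv :: "(nat \<Rightarrow> nat) \<Rightarrow> fm \<Rightarrow> bool" where
  "fv s (Eq a b) = (tv s a = tv s b)"
| "fv s (Lt a b) = (tv s a < tv s b)"
| "fv s (Neg p) = (\<not> fv s p)"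
| "fv s (Cj p q) = (fv s p \<and> fv s q)"
| "fv s (Dj p q) = (fv s p \<or> fv s q)"
| "fv s (BEx x b p) = (\<exists>v < tv s b. fv (s(x := v)) p)"

primrec idx :: "nat list \<Rightarrow> nat \<Rightarrow> nat" where
  "idx [] x = 0"
| "idx (y # ys) x = (if x = y then 0 else Suc (idx ys x))"

definition envf :: "nat list \<Rightarrow> nat list \<Rightarrow> nat \<Rightarrow> nat" where
  "envf ctx env x = arg env (idx ctx x)"

lemma envf_cons: "envf (x # ctx) (m # env) = (envf ctx env)(x := m)"
  by (rule ext) (auto simp: envf_def arg_def)

primrec ct :: "nat list \<Rightarrow> tm \<Rightarrow> recf" where
  "ct ctx (V x) = Id (idx ctx x)"
| "ct ctx (N c) = cst c"
| "ct ctx (Sc t) = Cn S [ct ctx t]"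
| "ct ctx (Pl a b) = Cn ADD [ct ctx a, ct ctx b]"
| "ct ctx (Ml a b) = Cn MUL [ct ctx a, ct ctx b]"
| "ct ctx (P2 a) = Cn POW2 [ct ctx a]"
| "ct ctx (Pe a b) = Cn PE [ct ctx a, ct ctx b]"
| "ct ctx (CC a) = Cn CCP [ct ctx a]"

lemma eval_ct: "eval (ct ctx t) env (tv (envf ctx env) t)"
  by (induction t) (auto intro!: eval_IdI eval_cst eval_Cn1 eval_Cn2 eval_SI eval_ADD eval_MUL eval_POW2 eval_PE eval_CCP
      simp: envf_def arg_def)

primrec cf :: "nat list \<Rightarrow> fm \<Rightarrow> recf" where
  "cf ctx (Eq a b) = Cn EQ [ct ctx a, ct ctx b]"
| "cf ctx (Lt a b) = Cn LT [ct ctx a, ct ctx b]"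
| "cf ctx (Neg p) = Cn NOT [cf ctx p]"
| "cf ctx (Cj p q) = Cn MUL [cf ctx p, cf ctx q]"
| "cf ctx (Dj p q) = Cn OR [cf ctx p, cf ctx q]"
| "cf ctx (BEx x b p) = Cn (Pr Z (Cn OR [Id 1, Cn (cf (x # ctx) p) (Id 0 # map (\<lambda>i. Id (i+2)) [0..<length ctx])]))
                           (ct ctx b # map Id [0..<length ctx])"

lemma eval_Cn_shift:
  assumes "eval f (m # env) y"
  shows "eval (Cn f (Id 0 # map (\<lambda>i. Id (i+2)) [0..<length env])) (m # z # env) y"
  apply (rule eval_Cn[where ys="m # env"])
  using assms by (auto intro!: eval_IdI simp: nth_Cons' arg_def)

lemma eval_Cn_front:
  assumes "eval g env a" "eval f (a # env) y"
  shows "eval (Cn f (g # map Id [0..<length env])) env y"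
  apply (rule eval_Cn[where ys="a # env"])
  using assms by (auto intro!: eval_IdI simp: nth_Cons' arg_def)

lemma eval_cf: "length env = length ctx \<Longrightarrow> eval (cf ctx p) env (b2n (fv (envf ctx env) p))"
proof (induction p arbitrary: ctx env)
  case (Eq a b) then show ?case by (auto intro!: eval_Cn2 eval_ct eval_EQ)
next
  case (Lt a b) then show ?case by (auto intro!: eval_Cn2 eval_ct eval_LT)
next
  case (Neg p) then show ?case by (auto intro!: eval_Cn1 eval_NOT)
next
  case (Cj p q) then show ?case by (auto intro!: eval_Cn2 eval_AND)
next
  case (Dj p q) then show ?case
    by (auto intro!: eval_Cn2 eval_ORb)
next
  case (BEx x b p)
  let ?s = "envf ctx env"
  let ?G = "\<lambda>m z. (if z + b2n (fv (?s(x := m)) p) = 0 then 0 else (1::nat))"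
  have g: "eval (Cn OR [Id 1, Cn (cf (x # ctx) p) (Id 0 # map (\<lambda>i. Id (i+2)) [0..<length ctx])]) (m # z # env) (?G m z)" for m z
  proof (rule eval_Cn2[OF eval_IdI])
    show "eval (Cn (cf (x # ctx) p) (Id 0 # map (\<lambda>i. Id (i + 2)) [0..<length ctx])) (m # z # env) (b2n (fv (?s(x := m)) p))"
      using eval_Cn_shift[OF BEx.IH[of "m # env" "x # ctx"]] BEx.prems by (simp add: envf_cons fun_upd_def)
    show "eval OR [arg (m # z # env) 1, b2n (fv (?s(x := m)) p)] (?G m z)"
      using eval_OR by (simp add: arg_def)
  qed simp
  have r: "rec_nat 0 ?G n = b2n (\<exists>v<n. fv (?s(x := v)) p)" for n
    by (induction n) (auto simp: b2n_def less_Suc_eq)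
  have "eval (Pr Z (Cn OR [Id 1, Cn (cf (x # ctx) p) (Id 0 # map (\<lambda>i. Id (i+2)) [0..<length ctx])])) (tv ?s b # env)
          (rec_nat 0 ?G (tv ?s b))"
    by (rule eval_Pr_rec[OF eval_ZI g]) simp
  then have "eval (Cn (Pr Z (Cn OR [Id 1, Cn (cf (x # ctx) p) (Id 0 # map (\<lambda>i. Id (i+2)) [0..<length ctx])]))
                           (ct ctx b # map Id [0..<length env])) env (b2n (\<exists>v<tv ?s b. fv (?s(x := v)) p))"
    by (intro eval_Cn_front[OF eval_ct]) (metis r)
  then show ?case using BEx.prems by simp
qed

definition s2 :: "nat \<Rightarrow> nat \<Rightarrow> nat \<Rightarrow> nat" where
  "s2 x y = (\<lambda>_. 0)(0 := x, 1 := y)"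

lemma envf_s2: "envf [1,0] [y,x] = s2 x y"
  by (rule ext) (auto simp: envf_def arg_def s2_def)

lemma eval_neg_cf: "eval (Cn NOT [cf [1,0] p]) [y,x] (b2n (\<not> fv (s2 x y) p))"
proof -
  have "eval (cf [1,0] p) [y,x] (b2n (fv (s2 x y) p))"
    using eval_cf[of "[y,x]" "[1,0]" p] by (simp only: envf_s2) simp
  then show ?thesis by (rule eval_Cn1) (rule eval_NOT)
qed

lemma ce_fm:
  assumes "\<And>x. x \<in> A \<longleftrightarrow> (\<exists>y. fv (s2 x y) p)"
  shows "\<exists>i. W i = A"
proof -
  let ?f = "Cn NOT [cf [1,0] p]"
  have "(\<exists>y. eval (Mn ?f) [x] y) \<longleftrightarrow> x \<in> A" for x
  proof
    assume "\<exists>y. eval (Mn ?f) [x] y"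
    then obtain n where "eval (Mn ?f) [x] n" by blast
    then have "eval ?f [n,x] 0" by (cases rule: eval.cases) auto
    with eval_neg_cf[where x=x and y=n and p=p] have "b2n (\<not> fv (s2 x n) p) = 0" using eval_det by blast
    then have "fv (s2 x n) p" by (auto simp: b2n_def split: if_splits)
    then show "x \<in> A" using assms by blast
  next
    assume "x \<in> A"
    then have ex: "\<exists>y. fv (s2 x y) p" using assms by blast
    let ?n = "LEAST y. fv (s2 x y) p"
    have "fv (s2 x ?n) p" using ex by (rule LeastI_ex)
    moreover have "\<forall>m<?n. \<not> fv (s2 x m) p" using not_less_Least by blast
    moreover have h: "\<And>m. eval ?f [m,x] (b2n (\<not> fv (s2 x m) p))" by (rule eval_neg_cf)
    ultimately have "eval (Mn ?f) [x] ?n"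
      by (intro eval_Mn) (metis b2n_def, metis b2n_def zero_neq_one)
    then show "\<exists>y. eval (Mn ?f) [x] y" by blast
  qed
  then have "W (code (Mn ?f)) = A" unfolding W_code by blast
  then show ?thesis by blast
qed

lemma comp_fm:
  assumes "\<And>x y. fv (s2 x y) p \<longleftrightarrow> y = F x"
  shows "computable F"
proof -
  let ?f = "Cn NOT [cf [1,0] p]"
  have h: "\<And>m x. eval ?f [m,x] (b2n (\<not> fv (s2 x m) p))" by (rule eval_neg_cf)
  have "eval (Mn ?f) [x] (F x)" for x
    using assms by (intro eval_Mn) (metis b2n_def h, metis b2n_def h zero_neq_one less_irrefl)
  then show ?thesis unfolding computable_def by blast
qed

abbreviation pe :: "nat \<Rightarrow> nat \<Rightarrow> nat" where "pe a b \<equiv> prod_encode (a, b)"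

definition fact :: "nat \<Rightarrow> nat \<Rightarrow> nat \<Rightarrow> nat \<Rightarrow> nat" where
  "fact k a b c = pe k (pe a (pe b c))"

lemma fact_eq[simp]: "fact k a b c = fact k' a' b' c' \<longleftrightarrow> k = k' \<and> a = a' \<and> b = b' \<and> c = c'"
  by (auto simp: fact_def)

definition J0 :: "nat set \<Rightarrow> nat \<Rightarrow> nat \<Rightarrow> nat \<Rightarrow> bool" where
  "J0 X a l y \<longleftrightarrow>
     (a = pe 0 0 \<and> y = 0)
   \<or> (a = pe 1 0 \<and> (\<exists>v. fact 2 l 0 v \<in> X \<and> y = Suc v))
   \<or> (\<exists>k. a = pe 2 k \<and> fact 2 l k y \<in> X)
   \<or> (\<exists>cf lg. a = pe 3 (pe cf lg) \<and> (\<exists>ly. fact 1 lg l ly \<in> X \<and> fact 0 cf ly y \<in> X))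
   \<or> (\<exists>cf cg. a = pe 4 (pe cf cg) \<and>
        ((l = 0 \<and> fact 0 cf 0 y \<in> X \<and> fact 3 a 0 0 \<in> X)
       \<or> (\<exists>l'. l = Suc (pe 0 l') \<and> fact 0 cf l' y \<in> X \<and> fact 3 a 0 0 \<in> X)
       \<or> (\<exists>n l'. l = Suc (pe (Suc n) l') \<and>
            (\<exists>z. fact 0 a (Suc (pe n l')) z \<in> X \<and> fact 0 cg (Suc (pe n (Suc (pe z l')))) y \<in> X))))
   \<or> (\<exists>cf. a = pe 5 cf \<and> fact 0 cf (Suc (pe y l)) 0 \<in> X \<and>
        (\<forall>m<y. \<exists>v. v \<noteq> 0 \<and> fact 0 cf (Suc (pe m l)) v \<in> X))"

definition J1 :: "nat set \<Rightarrow> nat \<Rightarrow> nat \<Rightarrow> nat \<Rightarrow> bool" where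
  "J1 X lg l ly \<longleftrightarrow> (lg = 0 \<and> ly = 0) \<or>
     (\<exists>g lg' y ly'. lg = Suc (pe g lg') \<and> ly = Suc (pe y ly') \<and> fact 0 g l y \<in> X \<and> fact 1 lg' l ly' \<in> X)"

definition J2 :: "nat set \<Rightarrow> nat \<Rightarrow> nat \<Rightarrow> nat \<Rightarrow> bool" where
  "J2 X l k v \<longleftrightarrow> (l = 0 \<and> v = 0) \<or>
     (\<exists>x l'. l = Suc (pe x l') \<and> ((k = 0 \<and> v = x) \<or> (\<exists>k'. k = Suc k' \<and> fact 2 l' k' v \<in> X)))"

definition J3 :: "nat set \<Rightarrow> nat \<Rightarrow> bool" where
  "J3 X c \<longleftrightarrow> c = pe 0 0 \<or> c = pe 1 0 \<or> (\<exists>k. c = pe 2 k)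
     \<or> (\<exists>cf lg. c = pe 3 (pe cf lg) \<and> fact 3 cf 0 0 \<in> X \<and> fact 4 lg 0 0 \<in> X)
     \<or> (\<exists>cf cg. c = pe 4 (pe cf cg) \<and> fact 3 cf 0 0 \<in> X \<and> fact 3 cg 0 0 \<in> X)
     \<or> (\<exists>cf. c = pe 5 cf \<and> fact 3 cf 0 0 \<in> X)"

definition J4 :: "nat set \<Rightarrow> nat \<Rightarrow> bool" where
  "J4 X lg \<longleftrightarrow> lg = 0 \<or> (\<exists>g lg'. lg = Suc (pe g lg') \<and> fact 3 g 0 0 \<in> X \<and> fact 4 lg' 0 0 \<in> X)"

definition J :: "nat set \<Rightarrow> nat \<Rightarrow> nat \<Rightarrow> nat \<Rightarrow> nat \<Rightarrow> bool" where
  "J X k a b c \<longleftrightarrow> (k = 0 \<and> J0 X a b c) \<or> (k = 1 \<and> J1 X a b c) \<or> (k = 2 \<and> J2 X a b c)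
     \<or> (k = 3 \<and> b = 0 \<and> c = 0 \<and> J3 X a) \<or> (k = 4 \<and> b = 0 \<and> c = 0 \<and> J4 X a)"

definition closedS :: "nat set \<Rightarrow> bool" where
  "closedS X \<longleftrightarrow> (\<forall>q\<in>X. \<exists>k a b c. q = fact k a b c \<and> J X k a b c)"

lemma closedD: "closedS X \<Longrightarrow> fact k a b c \<in> X \<Longrightarrow> J X k a b c"
  unfolding closedS_def by fastforce

lemma pe_less2: "0 < a \<Longrightarrow> b < pe a b"
proof -
  assume "0 < a"
  have t: "n \<le> triangle n" for n by (induction n) auto
  have "a + b \<le> triangle (a + b)" by (rule t)
  then show ?thesis using \<open>0 < a\<close> by (simp add: prod_encode_def)
qed

lemma pe_le1: "a \<le> pe a b" by (rule le_prod_encode_1)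
lemma pe_le2: "b \<le> pe a b" by (rule le_prod_encode_2)

lemma list_decode_Suc_pe[simp]: "list_decode (Suc (pe x l)) = x # list_decode l"
  by simp

lemma sound2: "closedS X \<Longrightarrow> fact 2 l k v \<in> X \<Longrightarrow> v = arg (list_decode l) k"
proof (induction l arbitrary: k v rule: less_induct)
  case (less l)
  have "J2 X l k v" using closedD[OF less.prems] by (simp add: J_def)
  then consider "l = 0" "v = 0" | x l' where "l = Suc (pe x l')" "k = 0" "v = x"
    | x l' k' where "l = Suc (pe x l')" "k = Suc k'" "fact 2 l' k' v \<in> X"
    unfolding J2_def by blast
  then show ?case
  proof cases
    case 1 then show ?thesis by (simp add: arg_def)
  next
    case 2 then show ?thesis by (simp add: arg_def)
  next
    case 3
    have "l' < l" using 3 pe_le2[of l' x] by simp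
    with less.IH[OF this less.prems(1) 3(3)] 3 show ?thesis by (simp add: arg_def)
  qed
qed

lemma sound34: "closedS X \<Longrightarrow> (fact 3 a 0 0 \<in> X \<longrightarrow> (\<exists>r. code r = a)) \<and> (fact 4 a 0 0 \<in> X \<longrightarrow> (\<exists>rs. list_encode (map code rs) = a))"
proof (induction a rule: less_induct)
  case (less a)
  have c3: "\<exists>r. code r = a" if "fact 3 a 0 0 \<in> X"
  proof -
    have "J3 X a" using closedD[OF less.prems that] by (simp add: J_def)
    then consider "a = pe 0 0" | "a = pe 1 0" | k where "a = pe 2 k"
      | cf lg where "a = pe 3 (pe cf lg)" "fact 3 cf 0 0 \<in> X" "fact 4 lg 0 0 \<in> X"
      | cf cg where "a = pe 4 (pe cf cg)" "fact 3 cf 0 0 \<in> X" "fact 3 cg 0 0 \<in> X"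
      | cf where "a = pe 5 cf" "fact 3 cf 0 0 \<in> X"
      unfolding J3_def by blast
    then show ?thesis
    proof cases
      case 1 then show ?thesis by (metis code.simps(1))
    next
      case 2 then show ?thesis by (metis code.simps(2))
    next
      case 3 then show ?thesis by (metis code.simps(3))
    next
      case 4
      have "cf < a" "lg < a" using 4 pe_less2[of 3] pe_le1 pe_le2 by (meson le_less_trans zero_less_numeral)+
      then obtain rf rs where "code rf = cf" "list_encode (map code rs) = lg"
        using less.IH less.prems 4 by blast
      then show ?thesis using 4 by (metis code.simps(4))
    next
      case 5
      have "cf < a" "cg < a" using 5 pe_less2[of 4] pe_le1 pe_le2 by (meson le_less_trans zero_less_numeral)+
      then obtain rf rg where "code rf = cf" "code rg = cg"
        using less.IH less.prems 5 by blast
      then show ?thesis using 5 by (metis code.simps(5))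
    next
      case 6
      have "cf < a" using 6 pe_less2[of 5] by simp
      then obtain rf where "code rf = cf" using less.IH less.prems 6 by blast
      then show ?thesis using 6 by (metis code.simps(6))
    qed
  qed
  have c4: "\<exists>rs. list_encode (map code rs) = a" if "fact 4 a 0 0 \<in> X"
  proof -
    have "J4 X a" using closedD[OF less.prems that] by (simp add: J_def)
    then consider "a = 0" | g lg' where "a = Suc (pe g lg')" "fact 3 g 0 0 \<in> X" "fact 4 lg' 0 0 \<in> X"
      unfolding J4_def by blast
    then show ?thesis
    proof cases
      case 1 then show ?thesis by (metis list.simps(8) list_encode.simps(1))
    next
      case 2
      have "g < a" "lg' < a" using 2 pe_le1 pe_le2 by (simp add: le_imp_less_Suc)+
      then obtain r rs where "code r = g" "list_encode (map code rs) = lg'"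
        using less.IH less.prems 2 by blast
      then show ?thesis using 2 by (metis list.simps(9) list_encode.simps(2))
    qed
  qed
  show ?case using c3 c4 by blast
qed

lemma code_Pr_inv: "code r = pe 4 (pe xf xg) \<Longrightarrow> \<exists>rf rg. r = Pr rf rg \<and> code rf = xf \<and> code rg = xg"
  by (cases r) auto

lemma J0_Pr:
  assumes "J0 X a l y" "a = pe 4 (pe xf xg)"
  shows "(l = 0 \<and> fact 0 xf 0 y \<in> X \<and> fact 3 a 0 0 \<in> X)
       \<or> (\<exists>l'. l = Suc (pe 0 l') \<and> fact 0 xf l' y \<in> X \<and> fact 3 a 0 0 \<in> X)
       \<or> (\<exists>n l'. l = Suc (pe (Suc n) l') \<and>
            (\<exists>z. fact 0 a (Suc (pe n l')) z \<in> X \<and> fact 0 xg (Suc (pe n (Suc (pe z l')))) y \<in> X))"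
  using assms unfolding J0_def by auto

lemma sound01:
  assumes cl: "closedS X"
  shows "(\<forall>l y. fact 0 a l y \<in> X \<longrightarrow> (\<exists>r. code r = a \<and> eval r (list_decode l) y)) \<and>
         (\<forall>l ly. fact 1 a l ly \<in> X \<longrightarrow> (\<exists>rs ys. list_encode (map code rs) = a \<and> list_encode ys = ly \<and>
              length ys = length rs \<and> (\<forall>i<length rs. eval (rs!i) (list_decode l) (ys!i))))"
proof (induction a rule: less_induct)
  case (less a)
  have IH0: "\<And>a' l y. a' < a \<Longrightarrow> fact 0 a' l y \<in> X \<Longrightarrow> \<exists>r. code r = a' \<and> eval r (list_decode l) y"
    using less.IH by blast
  have IH1: "\<And>a' l ly. a' < a \<Longrightarrow> fact 1 a' l ly \<in> X \<Longrightarrow> \<exists>rs ys. list_encode (map code rs) = a' \<and> list_encode ys = ly \<and>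
              length ys = length rs \<and> (\<forall>i<length rs. eval (rs!i) (list_decode l) (ys!i))"
    using less.IH by blast
  have k0: "\<exists>r. code r = a \<and> eval r (list_decode l) y" if f: "fact 0 a l y \<in> X" for l y
  proof -
    have "J0 X a l y" using closedD[OF cl f] by (simp add: J_def)
    then consider (z) "a = pe 0 0" "y = 0" | (s) v where "a = pe 1 0" "fact 2 l 0 v \<in> X" "y = Suc v"
      | (i) k where "a = pe 2 k" "fact 2 l k y \<in> X"
      | (c) xf lg ly where "a = pe 3 (pe xf lg)" "fact 1 lg l ly \<in> X" "fact 0 xf ly y \<in> X"
      | (p) xf xg where "a = pe 4 (pe xf xg)"
      | (m) xf where "a = pe 5 xf" "fact 0 xf (Suc (pe y l)) 0 \<in> X" "\<forall>m<y. \<exists>v. v \<noteq> 0 \<and> fact 0 xf (Suc (pe m l)) v \<in> X"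
      unfolding J0_def by blast
    then show ?thesis
    proof cases
      case z then show ?thesis by (metis code.simps(1) eval_Z)
    next
      case s
      have "v = arg (list_decode l) 0" using sound2[OF cl s(2)] .
      then show ?thesis using s by (metis code.simps(2) eval_S)
    next
      case i
      have "y = arg (list_decode l) k" using sound2[OF cl i(2)] .
      then show ?thesis using i by (metis code.simps(3) eval_Id)
    next
      case c
      have "xf < a" "lg < a" using c pe_less2[of 3] pe_le1 pe_le2 by (meson le_less_trans zero_less_numeral)+
      obtain rs ys where rs: "list_encode (map code rs) = lg" "list_encode ys = ly" "length ys = length rs"
        "\<forall>i<length rs. eval (rs!i) (list_decode l) (ys!i)" using IH1[OF \<open>lg < a\<close> c(2)] by blast
      obtain rf where rf: "code rf = xf" "eval rf (list_decode ly) y" using IH0[OF \<open>xf < a\<close> c(3)] by blast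
      have "eval (Cn rf rs) (list_decode l) y"
        by (rule eval_Cn[where ys=ys]) (use rs rf in auto)
      then show ?thesis using c rs rf by (metis code.simps(4))
    next
      case p
      have "xf < a" "xg < a" using p pe_less2[of 4] pe_le1 pe_le2 by (meson le_less_trans zero_less_numeral)+
      have J0a: "J0 X a l' z" if "fact 0 a l' z \<in> X" for l' z using closedD[OF cl that] by (simp add: J_def)
      have inner: "\<exists>r. code r = a \<and> eval r (n # list_decode l') z" if "fact 0 a (Suc (pe n l')) z \<in> X" for n l' z
        using that
      proof (induction n arbitrary: l' z)
        case 0
        from J0_Pr[OF J0a[OF 0] p] have "fact 0 xf l' z \<in> X" "fact 3 a 0 0 \<in> X" by auto
        obtain r where "code r = a" using sound34[OF cl] \<open>fact 3 a 0 0 \<in> X\<close> by blast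
        then obtain rf rg where r: "r = Pr rf rg" "code rf = xf" "code rg = xg" using code_Pr_inv p by blast
        obtain rf' where "code rf' = xf" "eval rf' (list_decode l') z" using IH0[OF \<open>xf < a\<close> \<open>fact 0 xf l' z \<in> X\<close>] by blast
        then have "eval rf (list_decode l') z" using r code_inj by blast
        then have "eval r (0 # list_decode l') z" using r by (auto intro: eval_Pr0)
        then show ?case using \<open>code r = a\<close> by blast
      next
        case (Suc n)
        from J0_Pr[OF J0a[OF Suc.prems] p] obtain z' where
          "fact 0 a (Suc (pe n l')) z' \<in> X" "fact 0 xg (Suc (pe n (Suc (pe z' l')))) z \<in> X" by auto
        obtain r where r: "code r = a" "eval r (n # list_decode l') z'" using Suc.IH \<open>fact 0 a (Suc (pe n l')) z' \<in> X\<close> by blast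
        then obtain rf rg where rr: "r = Pr rf rg" "code rf = xf" "code rg = xg" using code_Pr_inv p by blast
        obtain rg' where "code rg' = xg" "eval rg' (n # z' # list_decode l') z"
          using IH0[OF \<open>xg < a\<close> \<open>fact 0 xg (Suc (pe n (Suc (pe z' l')))) z \<in> X\<close>] by auto
        then have "eval rg (n # z' # list_decode l') z" using rr code_inj by blast
        then have "eval r (Suc n # list_decode l') z" using r rr by (auto intro: eval_PrS)
        then show ?case using r by blast
      qed
      from J0_Pr[OF J0a[OF f] p] consider "l = 0" "fact 0 xf 0 y \<in> X" "fact 3 a 0 0 \<in> X"
        | n l' where "l = Suc (pe n l')" "fact 0 a (Suc (pe n l')) y \<in> X"
        using f by auto
      then show ?thesis
      proof cases
        case 1
        obtain r where "code r = a" using sound34[OF cl] \<open>fact 3 a 0 0 \<in> X\<close> by blast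
        then obtain rf rg where r: "r = Pr rf rg" "code rf = xf" "code rg = xg" using code_Pr_inv p by blast
        obtain rf' where "code rf' = xf" "eval rf' (list_decode 0) y" using IH0[OF \<open>xf < a\<close> 1(2)] by blast
        then have "eval rf [] y" using r code_inj by auto
        then have "eval r [] y" using r by (auto intro: eval_Pr0_nil)
        then show ?thesis using \<open>code r = a\<close> 1 by auto
      next
        case 2
        then show ?thesis using inner by auto
      qed
    next
      case m
      have "xf < a" using m pe_less2[of 5] by simp
      obtain rf where rf: "code rf = xf" "eval rf (y # list_decode l) 0" using IH0[OF \<open>xf < a\<close> m(2)] by auto
      have "\<forall>k<y. \<exists>v. eval rf (k # list_decode l) v \<and> v \<noteq> 0"
      proof (intro allI impI)
        fix k assume "k < y"
        then obtain v where "v \<noteq> 0" "fact 0 xf (Suc (pe k l)) v \<in> X" using m by blast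
        then obtain r' where "code r' = xf" "eval r' (k # list_decode l) v" using IH0[OF \<open>xf < a\<close>] by fastforce
        then show "\<exists>v. eval rf (k # list_decode l) v \<and> v \<noteq> 0" using rf code_inj \<open>v \<noteq> 0\<close> by blast
      qed
      then have "eval (Mn rf) (list_decode l) y" using rf by (auto intro: eval_Mn)
      then show ?thesis using m rf by (metis code.simps(6))
    qed
  qed
  have k1: "\<exists>rs ys. list_encode (map code rs) = a \<and> list_encode ys = ly \<and>
              length ys = length rs \<and> (\<forall>i<length rs. eval (rs!i) (list_decode l) (ys!i))"
    if f: "fact 1 a l ly \<in> X" for l ly
  proof -
    have "J1 X a l ly" using closedD[OF cl f] by (simp add: J_def)
    then consider "a = 0" "ly = 0" | g lg' y ly' where "a = Suc (pe g lg')" "ly = Suc (pe y ly')"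
        "fact 0 g l y \<in> X" "fact 1 lg' l ly' \<in> X"
      unfolding J1_def by blast
    then show ?thesis
    proof cases
      case 1 then show ?thesis by (rule_tac x="[]" in exI, rule_tac x="[]" in exI) auto
    next
      case 2
      have "g < a" "lg' < a" using 2 pe_le1 pe_le2 by (simp add: le_imp_less_Suc)+
      obtain rg where rg: "code rg = g" "eval rg (list_decode l) y" using IH0[OF \<open>g < a\<close> 2(3)] by blast
      obtain rs ys where rs: "list_encode (map code rs) = lg'" "list_encode ys = ly'" "length ys = length rs"
        "\<forall>i<length rs. eval (rs!i) (list_decode l) (ys!i)" using IH1[OF \<open>lg' < a\<close> 2(4)] by blast
      show ?thesis
        by (rule exI[where x="rg # rs"], rule exI[where x="y # ys"])
           (use 2 rg rs in \<open>auto simp: nth_Cons' \<close>)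
    qed
  qed
  show ?case using k0 k1 by blast
qed

definition cert :: "nat set \<Rightarrow> bool" where "cert X \<longleftrightarrow> finite X \<and> closedS X"

lemma J0_mono: "J0 X a b c \<Longrightarrow> X \<subseteq> Y \<Longrightarrow> J0 Y a b c"
  unfolding J0_def
  apply (erule disj_forward, blast)+
  apply blast
  done
lemma J1_mono: "J1 X a b c \<Longrightarrow> X \<subseteq> Y \<Longrightarrow> J1 Y a b c"
  unfolding J1_def by blast
lemma J2_mono: "J2 X a b c \<Longrightarrow> X \<subseteq> Y \<Longrightarrow> J2 Y a b c"
  unfolding J2_def by blast
lemma J3_mono: "J3 X a \<Longrightarrow> X \<subseteq> Y \<Longrightarrow> J3 Y a"
  unfolding J3_def by blast
lemma J4_mono: "J4 X a \<Longrightarrow> X \<subseteq> Y \<Longrightarrow> J4 Y a"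
  unfolding J4_def by blast
lemma J_mono: "J X k a b c \<Longrightarrow> X \<subseteq> Y \<Longrightarrow> J Y k a b c"
  unfolding J_def by (metis J0_mono J1_mono J2_mono J3_mono J4_mono)

lemma cert_empty: "cert {}" by (simp add: cert_def closedS_def)

lemma cert_Un: "cert X \<Longrightarrow> cert Y \<Longrightarrow> cert (X \<union> Y)"
  unfolding cert_def closedS_def by (meson J_mono Un_iff finite_UnI sup_ge1 sup_ge2)

lemma cert_UN: "finite I \<Longrightarrow> (\<And>i. i \<in> I \<Longrightarrow> cert (F i)) \<Longrightarrow> cert (\<Union>i\<in>I. F i)"
  unfolding cert_def closedS_def
  by (auto, meson J_mono UN_upper)

lemma cert_insert: "cert X \<Longrightarrow> J X k a b c \<Longrightarrow> cert (insert (fact k a b c) X)"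
  unfolding cert_def closedS_def by (meson J_mono insert_iff finite_insert subset_insertI)

lemma arg_cert: "\<exists>X. cert X \<and> fact 2 (list_encode xs) k (arg xs k) \<in> X"
proof (induction xs arbitrary: k)
  case Nil
  have "J {} 2 (list_encode []) k (arg [] k)" by (simp add: J_def J2_def arg_def)
  then show ?case using cert_insert[OF cert_empty] by blast
next
  case (Cons x xs)
  show ?case
  proof (cases k)
    case 0
    have "J {} 2 (list_encode (x # xs)) k (arg (x # xs) k)" using 0 by (simp add: J_def J2_def arg_def)
    then show ?thesis using cert_insert[OF cert_empty] by blast
  next
    case (Suc k')
    obtain X where X: "cert X" "fact 2 (list_encode xs) k' (arg xs k') \<in> X" using Cons.IH by blast
    have "arg (x # xs) k = arg xs k'" using Suc by (simp add: arg_def)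
    then have "J X 2 (list_encode (x # xs)) k (arg (x # xs) k)" using Suc X(2) by (simp add: J_def J2_def)
    then show ?thesis using cert_insert[OF X(1)] by blast
  qed
qed

lemma valid_cert: "\<exists>X. cert X \<and> fact 3 (code r) 0 0 \<in> X"
proof (induction r)
  case Z
  have "J {} 3 (code Z) 0 0" by (simp add: J_def J3_def)
  then show ?case using cert_insert[OF cert_empty] by blast
next
  case S
  have "J {} 3 (code S) 0 0" by (simp add: J_def J3_def)
  then show ?case using cert_insert[OF cert_empty] by blast
next
  case (Id k)
  have "J {} 3 (code (Id k)) 0 0" by (simp add: J_def J3_def)
  then show ?case using cert_insert[OF cert_empty] by blast
next
  case (Cn f gs)
  have L: "\<exists>X. cert X \<and> fact 4 (list_encode (map code hs)) 0 0 \<in> X" if "set hs \<subseteq> set gs" for hs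
    using that
  proof (induction hs)
    case Nil
    have "J {} 4 (list_encode (map code [])) 0 0" by (simp add: J_def J4_def)
    then show ?case using cert_insert[OF cert_empty] by blast
  next
    case (Cons h hs)
    obtain X1 where X1: "cert X1" "fact 3 (code h) 0 0 \<in> X1" using Cn.IH Cons.prems by auto
    obtain X2 where X2: "cert X2" "fact 4 (list_encode (map code hs)) 0 0 \<in> X2" using Cons.IH Cons.prems by auto
    have "J (X1 \<union> X2) 4 (list_encode (map code (h # hs))) 0 0" using X1 X2 by (simp add: J_def J4_def)
    then show ?case using cert_insert[OF cert_Un[OF X1(1) X2(1)]] by blast
  qed
  obtain X1 where X1: "cert X1" "fact 3 (code f) 0 0 \<in> X1" using Cn.IH by auto
  obtain X2 where X2: "cert X2" "fact 4 (list_encode (map code gs)) 0 0 \<in> X2" using L by blast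
  have "J (X1 \<union> X2) 3 (code (Cn f gs)) 0 0" using X1 X2 by (simp add: J_def J3_def)
  then show ?case using cert_insert[OF cert_Un[OF X1(1) X2(1)]] by blast
next
  case (Pr f g)
  obtain X1 where X1: "cert X1" "fact 3 (code f) 0 0 \<in> X1" using Pr.IH by auto
  obtain X2 where X2: "cert X2" "fact 3 (code g) 0 0 \<in> X2" using Pr.IH by auto
  have "J (X1 \<union> X2) 3 (code (Pr f g)) 0 0" using X1 X2 by (simp add: J_def J3_def)
  then show ?case using cert_insert[OF cert_Un[OF X1(1) X2(1)]] by blast
next
  case (Mn f)
  obtain X1 where X1: "cert X1" "fact 3 (code f) 0 0 \<in> X1" using Mn.IH by auto
  have "J X1 3 (code (Mn f)) 0 0" using X1 by (simp add: J_def J3_def)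
  then show ?case using cert_insert[OF X1(1)] by blast
qed

lemma list_cert:
  assumes "length ys = length gs" "\<forall>i<length gs. \<exists>X. cert X \<and> fact 0 (code (gs!i)) l (ys!i) \<in> X"
  shows "\<exists>X. cert X \<and> fact 1 (list_encode (map code gs)) l (list_encode ys) \<in> X"
  using assms
proof (induction gs arbitrary: ys)
  case Nil
  have "J {} 1 (list_encode (map code [])) l (list_encode ys)" using Nil by (simp add: J_def J1_def)
  then show ?case using cert_insert[OF cert_empty] by blast
next
  case (Cons g gs)
  obtain y ys' where ys: "ys = y # ys'" using Cons.prems by (cases ys) auto
  obtain X1 where X1: "cert X1" "fact 0 (code g) l y \<in> X1" using Cons.prems(2) ys by force
  obtain X2 where X2: "cert X2" "fact 1 (list_encode (map code gs)) l (list_encode ys') \<in> X2"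
    using Cons.IH[of ys'] Cons.prems ys by fastforce
  have "J (X1 \<union> X2) 1 (list_encode (map code (g # gs))) l (list_encode ys)" using X1 X2 ys
    by (simp add: J_def J1_def)
  then show ?case using cert_insert[OF cert_Un[OF X1(1) X2(1)]] by blast
qed

lemma complete: "eval r xs y \<Longrightarrow> \<exists>X. cert X \<and> fact 0 (code r) (list_encode xs) y \<in> X"
proof (induction rule: eval.induct)
  case (eval_Z xs)
  have "J {} 0 (code Z) (list_encode xs) 0" by (simp add: J_def J0_def)
  then show ?case using cert_insert[OF cert_empty] by blast
next
  case (eval_S xs)
  obtain X where X: "cert X" "fact 2 (list_encode xs) 0 (arg xs 0) \<in> X" using arg_cert by blast
  have "J X 0 (code S) (list_encode xs) (Suc (arg xs 0))" using X by (simp add: J_def J0_def)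
  then show ?case using cert_insert[OF X(1)] by blast
next
  case (eval_Id k xs)
  obtain X where X: "cert X" "fact 2 (list_encode xs) k (arg xs k) \<in> X" using arg_cert by blast
  have "J X 0 (code (Id k)) (list_encode xs) (arg xs k)" using X by (simp add: J_def J0_def)
  then show ?case using cert_insert[OF X(1)] by blast
next
  case (eval_Cn ys gs xs f y)
  obtain X1 where X1: "cert X1" "fact 1 (list_encode (map code gs)) (list_encode xs) (list_encode ys) \<in> X1"
    using list_cert[OF eval_Cn.hyps(1)] eval_Cn.IH(1) by blast
  obtain X2 where X2: "cert X2" "fact 0 (code f) (list_encode ys) y \<in> X2" using eval_Cn.IH(2) by blast
  have "J (X1 \<union> X2) 0 (code (Cn f gs)) (list_encode xs) y" using X1 X2 by (simp add: J_def J0_def) blast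
  then show ?case using cert_insert[OF cert_Un[OF X1(1) X2(1)]] by blast
next
  case (eval_Pr0 f xs y g)
  obtain X1 where X1: "cert X1" "fact 0 (code f) (list_encode xs) y \<in> X1" using eval_Pr0.IH by blast
  obtain X2 where X2: "cert X2" "fact 3 (code (Pr f g)) 0 0 \<in> X2" using valid_cert by blast
  have "J (X1 \<union> X2) 0 (code (Pr f g)) (list_encode (0 # xs)) y" using X1 X2
    by (simp add: J_def J0_def del: code.simps) (simp add: J_def J0_def)
  then show ?case using cert_insert[OF cert_Un[OF X1(1) X2(1)]] by blast
next
  case (eval_Pr0_nil f y g)
  obtain X1 where X1: "cert X1" "fact 0 (code f) (list_encode []) y \<in> X1" using eval_Pr0_nil.IH by blast
  obtain X2 where X2: "cert X2" "fact 3 (code (Pr f g)) 0 0 \<in> X2" using valid_cert by blast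
  have "J (X1 \<union> X2) 0 (code (Pr f g)) (list_encode []) y" using X1 X2
    by (simp add: J_def J0_def del: code.simps) (simp add: J_def J0_def)
  then show ?case using cert_insert[OF cert_Un[OF X1(1) X2(1)]] by blast
next
  case (eval_PrS f g n xs z y)
  obtain X1 where X1: "cert X1" "fact 0 (code (Pr f g)) (list_encode (n # xs)) z \<in> X1" using eval_PrS.IH by blast
  obtain X2 where X2: "cert X2" "fact 0 (code g) (list_encode (n # z # xs)) y \<in> X2" using eval_PrS.IH by blast
  have "J (X1 \<union> X2) 0 (code (Pr f g)) (list_encode (Suc n # xs)) y" using X1 X2
    by (simp add: J_def J0_def) blast
  then show ?case using cert_insert[OF cert_Un[OF X1(1) X2(1)]] by blast
next
  case (eval_Mn f n xs)
  obtain X1 where X1: "cert X1" "fact 0 (code f) (list_encode (n # xs)) 0 \<in> X1" using eval_Mn.IH by blast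
  have "\<forall>m<n. \<exists>v X. v \<noteq> 0 \<and> cert X \<and> fact 0 (code f) (list_encode (m # xs)) v \<in> X"
    using eval_Mn.IH(2) by blast
  then obtain v F where vF: "\<And>m. m < n \<Longrightarrow> v m \<noteq> 0 \<and> cert (F m) \<and> fact 0 (code f) (list_encode (m # xs)) (v m) \<in> F m"
    by metis
  let ?Y = "X1 \<union> (\<Union>m\<in>{..<n}. F m)"
  have cY: "cert ?Y" using X1 vF by (intro cert_Un cert_UN) auto
  have "J ?Y 0 (code (Mn f)) (list_encode xs) n" using X1 vF
    by (simp add: J_def J0_def) blast
  then show ?case using cert_insert[OF cY] by blast
qed

lemma W_cert: "x \<in> W i \<longleftrightarrow> (\<exists>X y. cert X \<and> fact 0 i (list_encode [x]) y \<in> X)"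
proof
  assume "x \<in> W i"
  then obtain r where r: "code r = i" unfolding W_def by (auto split: if_splits)
  then have "x \<in> W (code r)" using \<open>x \<in> W i\<close> by simp
  then obtain y where "eval r [x] y" unfolding W_code by blast
  then show "\<exists>X y. cert X \<and> fact 0 i (list_encode [x]) y \<in> X" using complete r by fastforce
next
  assume "\<exists>X y. cert X \<and> fact 0 i (list_encode [x]) y \<in> X"
  then obtain X y where "cert X" "fact 0 i (list_encode [x]) y \<in> X" by blast
  then obtain r where "code r = i" "eval r (list_decode (list_encode [x])) y"
    using sound01[of X i] unfolding cert_def by blast
  then show "x \<in> W i" using W_code by auto
qed

primrec tvars :: "tm \<Rightarrow> nat set" where
  "tvars (V x) = {x}"
| "tvars (N c) = {}"
| "tvars (Sc t) = tvars t"
| "tvars (Pl a b) = tvars a \<union> tvars b"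
| "tvars (Ml a b) = tvars a \<union> tvars b"
| "tvars (P2 a) = tvars a"
| "tvars (Pe a b) = tvars a \<union> tvars b"
| "tvars (CC a) = tvars a"

lemma tv_upd[simp]: "x \<notin> tvars t \<Longrightarrow> tv (s(x := v)) t = tv s t"
  by (induction t) auto

definition memf :: "tm \<Rightarrow> tm \<Rightarrow> fm" where
  "memf a b = BEx 398 (Sc b) (BEx 399 (P2 a) (Eq b (Pl (Pl (Ml (V 398) (P2 (Sc a))) (P2 a)) (V 399))))"

lemma mem_iff: "n \<in> set_decode d \<longleftrightarrow> (\<exists>q<Suc d. \<exists>r<2^n. d = q * 2^Suc n + 2^n + (r::nat))"
proof
  assume "n \<in> set_decode d"
  then have "odd (d div 2^n)" by (simp add: set_decode_def)
  then obtain q where q: "d div 2^n = 2*q + 1" by (metis oddE)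
  have "d = (d div 2^n) * 2^n + d mod 2^n" by (rule div_mult_mod_eq[symmetric])
  also have "\<dots> = q * 2^Suc n + 2^n + d mod 2^n" using q by (simp add: algebra_simps)
  finally have e: "d = q * 2^Suc n + 2^n + d mod 2^n" .
  have "q \<le> d" using e by (metis le_add1 le_trans mult_le_mono1 one_le_numeral one_le_power mult_1 mult.commute)
  moreover have "d mod 2^n < 2^n" by simp
  ultimately show "\<exists>q<Suc d. \<exists>r<2^n. d = q * 2^Suc n + 2^n + r" using e le_imp_less_Suc by blast
next
  assume "\<exists>q<Suc d. \<exists>r<2^n. d = q * 2^Suc n + 2^n + (r::nat)"
  then obtain q r where "r < 2^n" "d = q * 2^Suc n + 2^n + r" by blast
  then have d: "d = r + (2*q+1) * 2^n" by (simp add: algebra_simps)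
  have "d div 2^n = (2*q+1) + r div 2^n" unfolding d by (rule div_mult_self1) simp
  also have "r div 2^n = 0" using \<open>r < 2^n\<close> by simp
  finally have "d div 2^n = 2*q + 1" by simp
  then show "n \<in> set_decode d" by (simp add: set_decode_def)
qed

lemma fv_memf[simp]: "398 \<notin> tvars a \<Longrightarrow> 399 \<notin> tvars a \<Longrightarrow> 398 \<notin> tvars b \<Longrightarrow> 399 \<notin> tvars b \<Longrightarrow>
   fv s (memf a b) \<longleftrightarrow> tv s a \<in> set_decode (tv s b)"
  unfolding memf_def mem_iff by (simp add: mult.commute)

definition All :: "nat \<Rightarrow> tm \<Rightarrow> fm \<Rightarrow> fm" where "All x b p = Neg (BEx x b (Neg p))"
definition Imp :: "fm \<Rightarrow> fm \<Rightarrow> fm" where "Imp p q = Dj (Neg p) q"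
definition fct :: "tm \<Rightarrow> tm \<Rightarrow> tm \<Rightarrow> tm \<Rightarrow> tm" where "fct k a b c = Pe k (Pe a (Pe b c))"

lemma fv_All[simp]: "fv s (All x b p) \<longleftrightarrow> (\<forall>v < tv s b. fv (s(x := v)) p)"
  by (auto simp: All_def)
lemma fv_Imp[simp]: "fv s (Imp p q) \<longleftrightarrow> (fv s p \<longrightarrow> fv s q)"
  by (auto simp: Imp_def)
lemma tv_fct[simp]: "tv s (fct k a b c) = fact (tv s k) (tv s a) (tv s b) (tv s c)"
  by (simp add: fct_def fact_def)
lemma tvars_fct[simp]: "tvars (fct k a b c) = tvars k \<union> tvars a \<union> tvars b \<union> tvars c"
  by (auto simp: fct_def)

lemma mem_lt: "x \<in> set_decode T \<Longrightarrow> x < T"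
proof -
  assume "x \<in> set_decode T"
  then have "odd (T div 2^x)" by (simp add: set_decode_def)
  then have "0 < T div 2^x" by (metis gr0I odd_pos)
  then have "2^x \<le> T" by (metis div_greater_zero_iff)
  moreover have "x < 2^x" by (rule less_exp)
  ultimately show "x < T" by linarith
qed

lemma fact_lt:
  assumes "fact k a b c \<in> set_decode T" shows "k < T" "a < T" "b < T" "c < T"
proof -
  have "fact k a b c < T" using mem_lt assms by blast
  then show "k < T" "a < T" "b < T" "c < T" unfolding fact_def
    by (meson le_less_trans pe_le1 pe_le2)+
qed

lemma pe_lt: "pe x y < T \<Longrightarrow> x < T \<and> y < T"
  by (meson le_less_trans pe_le1 pe_le2)
lemma Spe_lt: "Suc (pe x y) < T \<Longrightarrow> x < T \<and> y < T"
  by (meson Suc_lessD le_less_trans pe_le1 pe_le2)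

definition J2f :: "nat \<Rightarrow> fm" where
  "J2f t = (let T = V t; A = V 303; L = V 304; Y = V 305; M = (\<lambda>x. memf x T) in
   Dj (Cj (Eq A (N 0)) (Eq Y (N 0))) (BEx 310 T (BEx 311 T (Cj (Eq A (Sc (Pe (V 310) (V 311))))
     (Dj (Cj (Eq L (N 0)) (Eq Y (V 310))) (BEx 312 T (Cj (Eq L (Sc (V 312))) (M (fct (N 2) (V 311) (V 312) Y)))))))))"

lemma J2f_iff:
  assumes "t < 300" "s t = T" "s 303 = a" "s 304 = l" "s 305 = y" "a < T" "l < T" "y < T"
  shows "fv s (J2f t) \<longleftrightarrow> J2 (set_decode T) a l y"
  using assms unfolding J2f_def J2_def Let_def
  by (auto dest: fact_lt pe_lt Spe_lt)


definition J1f :: "nat \<Rightarrow> fm" where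
  "J1f t = (let T = V t; A = V 303; L = V 304; Y = V 305; M = (\<lambda>x. memf x T) in
   Dj (Cj (Eq A (N 0)) (Eq Y (N 0))) (BEx 310 T (BEx 311 T (BEx 312 T (BEx 313 T
     (Cj (Eq A (Sc (Pe (V 310) (V 311)))) (Cj (Eq Y (Sc (Pe (V 312) (V 313))))
       (Cj (M (fct (N 0) (V 310) L (V 312))) (M (fct (N 1) (V 311) L (V 313)))))))))))"

lemma J1f_iff:
  assumes "t < 300" "s t = T" "s 303 = a" "s 304 = l" "s 305 = y" "a < T" "l < T" "y < T"
  shows "fv s (J1f t) \<longleftrightarrow> J1 (set_decode T) a l y"
  using assms unfolding J1f_def J1_def Let_def
  by (auto dest: fact_lt pe_lt Spe_lt)

definition J3f :: "nat \<Rightarrow> fm" where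
  "J3f t = (let T = V t; A = V 303; M = (\<lambda>x. memf x T) in
   Dj (Eq A (Pe (N 0) (N 0))) (Dj (Eq A (Pe (N 1) (N 0))) (Dj (BEx 310 T (Eq A (Pe (N 2) (V 310))))
   (Dj (BEx 310 T (BEx 311 T (Cj (Eq A (Pe (N 3) (Pe (V 310) (V 311))))
          (Cj (M (fct (N 3) (V 310) (N 0) (N 0))) (M (fct (N 4) (V 311) (N 0) (N 0)))))))
   (Dj (BEx 310 T (BEx 311 T (Cj (Eq A (Pe (N 4) (Pe (V 310) (V 311))))
          (Cj (M (fct (N 3) (V 310) (N 0) (N 0))) (M (fct (N 3) (V 311) (N 0) (N 0)))))))
       (BEx 310 T (Cj (Eq A (Pe (N 5) (V 310))) (M (fct (N 3) (V 310) (N 0) (N 0))))))))))"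

lemma J3f_iff:
  assumes "t < 300" "s t = T" "s 303 = a" "a < T"
  shows "fv s (J3f t) \<longleftrightarrow> J3 (set_decode T) a"
  using assms unfolding J3f_def J3_def Let_def
  by (auto dest: fact_lt pe_lt Spe_lt)

definition J4f :: "nat \<Rightarrow> fm" where
  "J4f t = (let T = V t; A = V 303; M = (\<lambda>x. memf x T) in
   Dj (Eq A (N 0)) (BEx 310 T (BEx 311 T (Cj (Eq A (Sc (Pe (V 310) (V 311))))
          (Cj (M (fct (N 3) (V 310) (N 0) (N 0))) (M (fct (N 4) (V 311) (N 0) (N 0))))))))"

lemma J4f_iff:
  assumes "t < 300" "s t = T" "s 303 = a" "a < T"
  shows "fv s (J4f t) \<longleftrightarrow> J4 (set_decode T) a"
  using assms unfolding J4f_def J4_def Let_def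
  by (auto dest: fact_lt pe_lt Spe_lt)

definition "d1 t = Cj (Eq (V 303) (Pe (N 0) (N 0))) (Eq (V 305) (N 0))"
definition "d2 t = Cj (Eq (V 303) (Pe (N 1) (N 0))) (BEx 310 (V t) (Cj (memf (fct (N 2) (V 304) (N 0) (V 310)) (V t)) (Eq (V 305) (Sc (V 310)))))"
definition "d3 t = BEx 310 (V t) (Cj (Eq (V 303) (Pe (N 2) (V 310))) (memf (fct (N 2) (V 304) (V 310) (V 305)) (V t)))"
definition "d4 t = BEx 310 (V t) (BEx 311 (V t) (Cj (Eq (V 303) (Pe (N 3) (Pe (V 310) (V 311))))
        (BEx 312 (V t) (Cj (memf (fct (N 1) (V 311) (V 304) (V 312)) (V t)) (memf (fct (N 0) (V 310) (V 312) (V 305)) (V t))))))"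
definition "d5a t = Cj (Eq (V 304) (N 0)) (Cj (memf (fct (N 0) (V 310) (N 0) (V 305)) (V t)) (memf (fct (N 3) (V 303) (N 0) (N 0)) (V t)))"
definition "d5b t = BEx 312 (V t) (Cj (Eq (V 304) (Sc (Pe (N 0) (V 312)))) (Cj (memf (fct (N 0) (V 310) (V 312) (V 305)) (V t)) (memf (fct (N 3) (V 303) (N 0) (N 0)) (V t))))"
definition "d5c t = BEx 313 (V t) (BEx 312 (V t) (Cj (Eq (V 304) (Sc (Pe (Sc (V 313)) (V 312))))
               (BEx 314 (V t) (Cj (memf (fct (N 0) (V 303) (Sc (Pe (V 313) (V 312))) (V 314)) (V t))
                              (memf (fct (N 0) (V 311) (Sc (Pe (V 313) (Sc (Pe (V 314) (V 312))))) (V 305)) (V t))))))"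
definition "d5 t = BEx 310 (V t) (BEx 311 (V t) (Cj (Eq (V 303) (Pe (N 4) (Pe (V 310) (V 311)))) (Dj (d5a t) (Dj (d5b t) (d5c t)))))"
definition "d6 t = BEx 310 (V t) (Cj (Eq (V 303) (Pe (N 5) (V 310))) (Cj (memf (fct (N 0) (V 310) (Sc (Pe (V 305) (V 304))) (N 0)) (V t))
        (All 315 (V 305) (BEx 316 (V t) (Cj (Neg (Eq (V 316) (N 0))) (memf (fct (N 0) (V 310) (Sc (Pe (V 315) (V 304))) (V 316)) (V t)))))))"
definition "J0f t = Dj (d1 t) (Dj (d2 t) (Dj (d3 t) (Dj (d4 t) (Dj (d5 t) (d6 t)))))"

context
  fixes s :: "nat \<Rightarrow> nat" and t T a l y :: nat and X :: "nat set"
  assumes as: "t < 300" "s t = T" "s 303 = a" "s 304 = l" "s 305 = y" "a < T" "l < T" "y < T"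
    and X: "X = set_decode T"
begin

lemma d1_iff: "fv s (d1 t) \<longleftrightarrow> (a = pe 0 0 \<and> y = 0)"
  using as unfolding d1_def by auto
lemma d2_iff: "fv s (d2 t) \<longleftrightarrow> (a = pe 1 0 \<and> (\<exists>v. fact 2 l 0 v \<in> X \<and> y = Suc v))"
  using as X unfolding d2_def by (auto dest: fact_lt pe_lt Spe_lt)
lemma d3_iff: "fv s (d3 t) \<longleftrightarrow> (\<exists>k. a = pe 2 k \<and> fact 2 l k y \<in> X)"
  using as X unfolding d3_def by (auto dest: fact_lt pe_lt Spe_lt)
lemma d4_iff: "fv s (d4 t) \<longleftrightarrow> (\<exists>xf lg. a = pe 3 (pe xf lg) \<and> (\<exists>ly. fact 1 lg l ly \<in> X \<and> fact 0 xf ly y \<in> X))"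
  using as X unfolding d4_def by (auto dest: fact_lt pe_lt Spe_lt)
lemma d5_iff: "fv s (d5 t) \<longleftrightarrow> (\<exists>xf xg. a = pe 4 (pe xf xg) \<and>
        ((l = 0 \<and> fact 0 xf 0 y \<in> X \<and> fact 3 a 0 0 \<in> X)
       \<or> (\<exists>l'. l = Suc (pe 0 l') \<and> fact 0 xf l' y \<in> X \<and> fact 3 a 0 0 \<in> X)
       \<or> (\<exists>n l'. l = Suc (pe (Suc n) l') \<and>
            (\<exists>z. fact 0 a (Suc (pe n l')) z \<in> X \<and> fact 0 xg (Suc (pe n (Suc (pe z l')))) y \<in> X))))"
proof -
  have A: "fv (s(310 := u, 311 := w)) (d5a t) \<longleftrightarrow> (l = 0 \<and> fact 0 u 0 y \<in> X \<and> fact 3 a 0 0 \<in> X)" for u w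
    using as X unfolding d5a_def by auto
  have B: "fv (s(310 := u, 311 := w)) (d5b t) \<longleftrightarrow> (\<exists>l'. l = Suc (pe 0 l') \<and> fact 0 u l' y \<in> X \<and> fact 3 a 0 0 \<in> X)" for u w
    using as X unfolding d5b_def by (auto dest: fact_lt pe_lt Spe_lt)
  have C: "fv (s(310 := u, 311 := w)) (d5c t) \<longleftrightarrow> (\<exists>n l'. l = Suc (pe (Suc n) l') \<and>
            (\<exists>z. fact 0 a (Suc (pe n l')) z \<in> X \<and> fact 0 w (Suc (pe n (Suc (pe z l')))) y \<in> X))" for u w
  proof -
    have "fv (s(310 := u, 311 := w)) (d5c t) \<longleftrightarrow> (\<exists>n<T. \<exists>l'<T. l = Suc (pe (Suc n) l') \<and>
            (\<exists>z<T. fact 0 a (Suc (pe n l')) z \<in> X \<and> fact 0 w (Suc (pe n (Suc (pe z l')))) y \<in> X))"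
      using as X unfolding d5c_def by simp
    also have "\<dots> \<longleftrightarrow> (\<exists>n l'. l = Suc (pe (Suc n) l') \<and>
            (\<exists>z. fact 0 a (Suc (pe n l')) z \<in> X \<and> fact 0 w (Suc (pe n (Suc (pe z l')))) y \<in> X))"
    proof
      assume "\<exists>n l'. l = Suc (pe (Suc n) l') \<and>
            (\<exists>z. fact 0 a (Suc (pe n l')) z \<in> X \<and> fact 0 w (Suc (pe n (Suc (pe z l')))) y \<in> X)"
      then obtain n l' z where h: "l = Suc (pe (Suc n) l')" "fact 0 a (Suc (pe n l')) z \<in> X"
        "fact 0 w (Suc (pe n (Suc (pe z l')))) y \<in> X" by blast
      have "Suc n < T \<and> l' < T" using Spe_lt[of "Suc n" l' T] h(1) \<open>l < T\<close> by simp
      then have "n < T" "l' < T" by auto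
      moreover have "z < T" using h(2) X fact_lt by blast
      ultimately show "\<exists>n<T. \<exists>l'<T. l = Suc (pe (Suc n) l') \<and>
            (\<exists>z<T. fact 0 a (Suc (pe n l')) z \<in> X \<and> fact 0 w (Suc (pe n (Suc (pe z l')))) y \<in> X)"
        using h by blast
    qed blast
    finally show ?thesis .
  qed
  have "fv s (d5 t) \<longleftrightarrow> (\<exists>u<T. \<exists>w<T. a = pe 4 (pe u w) \<and>
      (fv (s(310 := u, 311 := w)) (d5a t) \<or> fv (s(310 := u, 311 := w)) (d5b t) \<or> fv (s(310 := u, 311 := w)) (d5c t)))"
    using as unfolding d5_def by simp
  also have "\<dots> \<longleftrightarrow> (\<exists>u w. a = pe 4 (pe u w) \<and>
      (fv (s(310 := u, 311 := w)) (d5a t) \<or> fv (s(310 := u, 311 := w)) (d5b t) \<or> fv (s(310 := u, 311 := w)) (d5c t)))"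
    using as pe_lt by blast
  finally show ?thesis unfolding A B C .
qed
lemma d6_iff: "fv s (d6 t) \<longleftrightarrow> (\<exists>xf. a = pe 5 xf \<and> fact 0 xf (Suc (pe y l)) 0 \<in> X \<and>
        (\<forall>m<y. \<exists>v. v \<noteq> 0 \<and> fact 0 xf (Suc (pe m l)) v \<in> X))"
proof -
  have "fv s (d6 t) \<longleftrightarrow> (\<exists>xf<T. a = pe 5 xf \<and> fact 0 xf (Suc (pe y l)) 0 \<in> X \<and>
        (\<forall>m<y. \<exists>v<T. v \<noteq> 0 \<and> fact 0 xf (Suc (pe m l)) v \<in> X))"
    using as X unfolding d6_def by simp
  also have "\<dots> \<longleftrightarrow> (\<exists>xf. a = pe 5 xf \<and> fact 0 xf (Suc (pe y l)) 0 \<in> X \<and>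
        (\<forall>m<y. \<exists>v. v \<noteq> 0 \<and> fact 0 xf (Suc (pe m l)) v \<in> X))"
  proof
    assume "\<exists>xf. a = pe 5 xf \<and> fact 0 xf (Suc (pe y l)) 0 \<in> X \<and>
        (\<forall>m<y. \<exists>v. v \<noteq> 0 \<and> fact 0 xf (Suc (pe m l)) v \<in> X)"
    then obtain xf where h: "a = pe 5 xf" "fact 0 xf (Suc (pe y l)) 0 \<in> X"
        "\<forall>m<y. \<exists>v. v \<noteq> 0 \<and> fact 0 xf (Suc (pe m l)) v \<in> X" by blast
    have "xf < T" using pe_lt[of 5 xf T] h(1) as by simp
    moreover have "\<forall>m<y. \<exists>v<T. v \<noteq> 0 \<and> fact 0 xf (Suc (pe m l)) v \<in> X"
      using h(3) X fact_lt(4) by blast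
    ultimately show "\<exists>xf<T. a = pe 5 xf \<and> fact 0 xf (Suc (pe y l)) 0 \<in> X \<and>
        (\<forall>m<y. \<exists>v<T. v \<noteq> 0 \<and> fact 0 xf (Suc (pe m l)) v \<in> X)" using h by blast
  qed blast
  finally show ?thesis .
qed

lemma J0f_iff: "fv s (J0f t) \<longleftrightarrow> J0 X a l y"
  unfolding J0f_def J0_def fv.simps d1_iff d2_iff d3_iff d4_iff d5_iff d6_iff ..

end


definition "Jf t = Dj (Cj (Eq (V 302) (N 0)) (J0f t)) (Dj (Cj (Eq (V 302) (N 1)) (J1f t)) (Dj (Cj (Eq (V 302) (N 2)) (J2f t))
   (Dj (Cj (Eq (V 302) (N 3)) (Cj (Eq (V 304) (N 0)) (Cj (Eq (V 305) (N 0)) (J3f t))))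
       (Cj (Eq (V 302) (N 4)) (Cj (Eq (V 304) (N 0)) (Cj (Eq (V 305) (N 0)) (J4f t)))))))"

lemma Jf_iff:
  assumes "t < 300" "s t = T" "s 302 = k" "s 303 = a" "s 304 = l" "s 305 = y" "a < T" "l < T" "y < T"
  shows "fv s (Jf t) \<longleftrightarrow> J (set_decode T) k a l y"
  using assms J0f_iff[OF assms(1,2,4-9) refl] J1f_iff[OF assms(1,2,4-9)] J2f_iff[OF assms(1,2,4-9)]
     J3f_iff[OF assms(1,2,4,7)] J4f_iff[OF assms(1,2,4,7)]
  unfolding Jf_def J_def by auto

definition "CLf t = All 301 (V t) (Imp (memf (V 301) (V t)) (BEx 302 (V t) (BEx 303 (V t) (BEx 304 (V t) (BEx 305 (V t)
   (Cj (Eq (V 301) (fct (V 302) (V 303) (V 304) (V 305))) (Jf t)))))))"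

lemma CL_iff:
  assumes "t < 300"
  shows "fv s (CLf t) \<longleftrightarrow> closedS (set_decode (s t))"
proof -
  let ?T = "s t" let ?X = "set_decode (s t)"
  have "fv s (CLf t) \<longleftrightarrow> (\<forall>q<?T. q \<in> ?X \<longrightarrow> (\<exists>k<?T. \<exists>a<?T. \<exists>b<?T. \<exists>c<?T. q = fact k a b c \<and>
      fv (s(301 := q, 302 := k, 303 := a, 304 := b, 305 := c)) (Jf t)))"
    using assms unfolding CLf_def by simp
  also have "\<dots> \<longleftrightarrow> (\<forall>q<?T. q \<in> ?X \<longrightarrow> (\<exists>k<?T. \<exists>a<?T. \<exists>b<?T. \<exists>c<?T. q = fact k a b c \<and> J ?X k a b c))"
  proof -
    have "fv (s(301 := q, 302 := k, 303 := a, 304 := b, 305 := c)) (Jf t) \<longleftrightarrow> J ?X k a b c"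
      if "a < ?T" "b < ?T" "c < ?T" for q k a b c
      using Jf_iff[of t "s(301 := q, 302 := k, 303 := a, 304 := b, 305 := c)" ?T k a b c] that assms by simp
    then show ?thesis by (meson less_trans)
  qed
  also have "\<dots> \<longleftrightarrow> closedS ?X"
    unfolding closedS_def using mem_lt fact_lt by metis
  finally show ?thesis .
qed

lemma W_certT: "x \<in> W i \<longleftrightarrow> (\<exists>T y. closedS (set_decode T) \<and> fact 0 i (Suc (pe x 0)) y \<in> set_decode T)"
proof -
  have "(\<exists>X y. cert X \<and> fact 0 i (list_encode [x]) y \<in> X) \<longleftrightarrow>
        (\<exists>T y. closedS (set_decode T) \<and> fact 0 i (Suc (pe x 0)) y \<in> set_decode T)"
  proof
    assume "\<exists>X y. cert X \<and> fact 0 i (list_encode [x]) y \<in> X"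
    then obtain X y where "cert X" "fact 0 i (list_encode [x]) y \<in> X" by blast
    moreover have "set_decode (set_encode X) = X" using \<open>cert X\<close> by (simp add: cert_def)
    ultimately have "closedS (set_decode (set_encode X)) \<and> fact 0 i (Suc (pe x 0)) y \<in> set_decode (set_encode X)"
      by (simp add: cert_def)
    then show "\<exists>T y. closedS (set_decode T) \<and> fact 0 i (Suc (pe x 0)) y \<in> set_decode T" by blast
  next
    assume "\<exists>T y. closedS (set_decode T) \<and> fact 0 i (Suc (pe x 0)) y \<in> set_decode T"
    then obtain T y where "closedS (set_decode T)" "fact 0 i (Suc (pe x 0)) y \<in> set_decode T" by blast
    then show "\<exists>X y. cert X \<and> fact 0 i (list_encode [x]) y \<in> X" unfolding cert_def
      by (intro exI[where x="set_decode T"] exI[where x=y]) simp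
  qed
  then show ?thesis using W_cert by simp
qed

lemma ce_fm_prog:
  assumes "\<And>x. x \<in> A \<longleftrightarrow> (\<exists>y. fv (s2 x y) p)"
  shows "\<exists>r. W (code r) = A"
proof -
  obtain i where "W i = A" using ce_fm assms by blast
  show ?thesis
  proof (cases "\<exists>r. code r = i")
    case True then show ?thesis using \<open>W i = A\<close> by blast
  next
    case False
    then have "A = {}" using \<open>W i = A\<close> unfolding W_def by simp
    moreover have "W (code (Mn (cst 1))) = {}"
      unfolding W_code by (auto elim!: eval.cases[of "Mn _"] dest: eval_det[OF eval_cst])
    ultimately show ?thesis by metis
  qed
qed

lemma Gamma_W: "W i = A \<Longrightarrow> Gamma i Y = {n. \<exists>d. pe n d \<in> A \<and> set_decode d \<subseteq> Y}"
  by (simp add: Gamma_def pair_def)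

lemma set_decode_pow2[simp]: "set_decode (2^m) = {m}"
  using set_decode_plus_power_2[of m 0] by simp

definition sng :: "nat \<Rightarrow> nat" where "sng m = 2^m"
lemma set_decode_sng[simp]: "set_decode (sng m) = {m}" by (simp add: sng_def)
lemma sng_inj[simp]: "sng a = sng b \<longleftrightarrow> a = b" by (simp add: sng_def)

definition dsum :: "nat set \<Rightarrow> nat \<Rightarrow> nat set" where
  "dsum Y c = (\<lambda>y. 2*y) ` Y \<union> {2*c+1}"

lemma s2_simps[simp]: "s2 x w 0 = x" "s2 x w 1 = w" by (auto simp: s2_def)

lemma s2_upd: "(s2 x w)(k := v) = (s2 x w)(k := v)" ..

definition "padS c = {x. \<exists>m. x = pe (2*m) (sng m)} \<union> {pe (2*c+1) 0}"
definition "padf c = Dj (BEx 2 (Sc (V 0)) (Eq (V 0) (Pe (Ml (N 2) (V 2)) (P2 (V 2))))) (Eq (V 0) (Pe (Sc (Ml (N 2) (N c))) (N 0)))"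

lemma le_pe_Suc: "m \<le> a \<Longrightarrow> m < Suc (pe a b)"
  using pe_le1[of a b] by linarith

lemma padS_fm: "x \<in> padS c \<longleftrightarrow> (\<exists>w. fv (s2 x w) (padf c))"
  unfolding padS_def padf_def
  by (auto simp: s2_def sng_def intro!: le_pe_Suc)

lemma Gamma_pad: "W i = padS c \<Longrightarrow> Gamma i A = dsum A c"
  unfolding dsum_def by (auto simp: Gamma_W padS_def)

definition "ES = {x. \<exists>m. x = pe m (sng ((2*m)))}"
definition "Ef = BEx 2 (Sc (V 0)) (Eq (V 0) (Pe (V 2) (P2 (Ml (N 2) (V 2)))))"
lemma ES_fm: "x \<in> ES \<longleftrightarrow> (\<exists>w. fv (s2 x w) Ef)"
  unfolding ES_def Ef_def by (auto simp: s2_def sng_def intro!: le_pe_Suc)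

lemma Gamma_E: "W i = ES \<Longrightarrow> Gamma i (dsum A c) = A"
  unfolding dsum_def by (auto simp: Gamma_W ES_def) presburger

definition "ShS = {x. \<exists>m. x = pe (2*m) (sng ((2*m)))} \<union> {x. \<exists>c. x = pe (2*c+3) (sng ((2*c+1)))}"
definition "Shf = Dj (BEx 2 (Sc (V 0)) (Eq (V 0) (Pe (Ml (N 2) (V 2)) (P2 (Ml (N 2) (V 2))))))
   (BEx 2 (Sc (V 0)) (Eq (V 0) (Pe (Sc (Sc (Sc (Ml (N 2) (V 2))))) (P2 (Sc (Ml (N 2) (V 2)))))))"
lemma ShS_fm: "x \<in> ShS \<longleftrightarrow> (\<exists>w. fv (s2 x w) Shf)"
  unfolding ShS_def Shf_def
  by (auto simp: s2_def sng_def intro!: le_pe_Suc)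

lemma Gamma_Sh: "W i = ShS \<Longrightarrow> Gamma i (dsum A c) = dsum A (Suc c)"
  unfolding dsum_def by (auto simp: Gamma_W ShS_def) presburger+

definition "ShiS = {x. \<exists>m. x = pe (2*m) (sng ((2*m)))} \<union> {x. \<exists>c. x = pe (2*c+1) (sng ((2*c+3)))}"
definition "Shif = Dj (BEx 2 (Sc (V 0)) (Eq (V 0) (Pe (Ml (N 2) (V 2)) (P2 (Ml (N 2) (V 2))))))
   (BEx 2 (Sc (V 0)) (Eq (V 0) (Pe (Sc (Ml (N 2) (V 2))) (P2 (Sc (Sc (Sc (Ml (N 2) (V 2)))))))))"
lemma ShiS_fm: "x \<in> ShiS \<longleftrightarrow> (\<exists>w. fv (s2 x w) Shif)"
  unfolding ShiS_def Shif_def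
  by (auto simp: s2_def sng_def power_add intro!: le_pe_Suc)

lemma Gamma_Shi: "W i = ShiS \<Longrightarrow> Gamma i (dsum A (Suc c)) = dsum A c"
  unfolding dsum_def by (auto simp: Gamma_W ShiS_def) presburger+

declare CL_iff[simp]

lemma odd_ne_even[simp]: "Suc (2*a) \<noteq> 2*b" "2*b \<noteq> Suc (2*a)" by presburger+
lemma s2_Suc0[simp]: "s2 x w (Suc 0) = w" by (simp add: s2_def)

definition "US = {x. \<exists>n d i j e. x = pe (2*n) d \<and> pe n e \<in> W i \<and> set_decode d = (\<lambda>z. 2*z) ` set_decode e \<union> {2 * pe i j + 1}}
   \<union> {x. \<exists>i j. x = pe (2 * pe j i + 1) (sng (2 * pe i j + 1))}"

lemma Gamma_U:
  assumes "W k = US"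
  shows "Gamma k (dsum A (pe i j)) = dsum (Gamma i A) (pe j i)"
proof (rule set_eqI)
  fix m
  show "m \<in> Gamma k (dsum A (pe i j)) \<longleftrightarrow> m \<in> dsum (Gamma i A) (pe j i)"
  proof
    assume "m \<in> Gamma k (dsum A (pe i j))"
    then obtain d where d: "pe m d \<in> US" "set_decode d \<subseteq> dsum A (pe i j)" using Gamma_W[OF assms] by blast
    from d(1) consider (a) n i' j' e where "m = 2*n" "pe n e \<in> W i'" "set_decode d = (\<lambda>z. 2*z) ` set_decode e \<union> {2 * pe i' j' + 1}"
      | (b) i' j' where "m = 2 * pe j' i' + 1" "d = sng (2 * pe i' j' + 1)"
      unfolding US_def by auto
    then show "m \<in> dsum (Gamma i A) (pe j i)"
    proof cases
      case a
      have "2 * pe i' j' + 1 \<in> dsum A (pe i j)" using a(3) d(2) by auto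
      then have "pe i' j' = pe i j" unfolding dsum_def by auto
      then have ij: "i' = i" "j' = j" by auto
      have "set_decode e \<subseteq> A"
      proof
        fix z assume "z \<in> set_decode e"
        then have "2*z \<in> dsum A (pe i j)" using a(3) d(2) by auto
        then show "z \<in> A" unfolding dsum_def by auto
      qed
      then have "n \<in> Gamma i A" using a(2) ij unfolding Gamma_def pair_def by blast
      then show ?thesis using a(1) unfolding dsum_def by auto
    next
      case b
      have "2 * pe i' j' + 1 \<in> dsum A (pe i j)" using b(2) d(2) by auto
      then have "pe i' j' = pe i j" unfolding dsum_def by auto
      then show ?thesis using b(1) unfolding dsum_def by auto
    qed
  next
    assume "m \<in> dsum (Gamma i A) (pe j i)"
    then consider (a) n where "m = 2*n" "n \<in> Gamma i A" | (b) "m = 2 * pe j i + 1" unfolding dsum_def by auto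
    then show "m \<in> Gamma k (dsum A (pe i j))"
    proof cases
      case a
      then obtain e where e: "pe n e \<in> W i" "set_decode e \<subseteq> A" unfolding Gamma_def pair_def by blast
      let ?D = "(\<lambda>z. 2*z) ` set_decode e \<union> {2 * pe i j + 1}"
      have fin: "finite ?D" by simp
      have "pe m (set_encode ?D) \<in> US" unfolding US_def using a(1) e(1) fin by auto
      moreover have "set_decode (set_encode ?D) \<subseteq> dsum A (pe i j)" using fin e(2) unfolding dsum_def by auto
      ultimately show ?thesis using Gamma_W[OF assms] by blast
    next
      case b
      have "pe m (sng (2 * pe i j + 1)) \<in> US" unfolding US_def using b by auto
      moreover have "set_decode (sng (2 * pe i j + 1)) \<subseteq> dsum A (pe i j)" unfolding dsum_def by auto
      ultimately show ?thesis using Gamma_W[OF assms] by blast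
    qed
  qed
qed

definition "SEr = Dj (Eq (V 11) (Sc (Ml (N 2) (Pe (V 5) (V 6))))) (BEx 12 (Sc (V 11)) (Cj (Eq (V 11) (Ml (N 2) (V 12))) (memf (V 12) (V 7))))"
definition "SE = All 11 (Sc (Sc (Pl (V 3) (Pl (Ml (N 2) (V 7)) (Ml (N 2) (Pe (V 5) (V 6)))))))
   (Cj (Imp (memf (V 11) (V 3)) SEr) (Imp SEr (memf (V 11) (V 3))))"

lemma fv_SEr: "fv s SEr \<longleftrightarrow> (s 11 = 2 * pe (s 5) (s 6) + 1 \<or> (\<exists>z'. s 11 = 2 * z' \<and> z' \<in> set_decode (s 7)))"
  unfolding SEr_def by auto

lemma fv_SE: "fv s SE \<longleftrightarrow> set_decode (s 3) = (\<lambda>z. 2*z) ` set_decode (s 7) \<union> {2 * pe (s 5) (s 6) + 1}"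
proof -
  let ?B = "Suc (Suc (s 3 + (2 * s 7 + 2 * pe (s 5) (s 6))))"
  let ?R = "(\<lambda>z. 2*z) ` set_decode (s 7) \<union> {2 * pe (s 5) (s 6) + 1}"
  have "fv s SE \<longleftrightarrow> (\<forall>z < ?B. z \<in> set_decode (s 3) \<longleftrightarrow> z \<in> ?R)"
    unfolding SE_def by (auto simp: fv_SEr)
  also have "\<dots> \<longleftrightarrow> set_decode (s 3) = ?R"
  proof
    assume h: "\<forall>z < ?B. z \<in> set_decode (s 3) \<longleftrightarrow> z \<in> ?R"
    have b1: "z < ?B" if "z \<in> set_decode (s 3)" for z using mem_lt[OF that] by simp
    have b2: "z < ?B" if "z \<in> ?R" for z
    proof -
      from that consider z' where "z = 2*z'" "z' \<in> set_decode (s 7)" | "z = 2 * pe (s 5) (s 6) + 1" by auto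
      then show ?thesis proof cases
        case 1 then show ?thesis using mem_lt[OF 1(2)] by simp
      qed simp
    qed
    show "set_decode (s 3) = ?R" using h b1 b2 by blast
  qed blast
  finally show ?thesis .
qed

definition "U1 = BEx 4 (V 1) (BEx 5 (V 1) (BEx 6 (V 1) (BEx 7 (V 1) (Cj (Eq (V 2) (Ml (N 2) (V 4))) (Cj SE
   (BEx 8 (V 1) (BEx 9 (V 1) (Cj (CLf 8) (memf (fct (N 0) (V 5) (Sc (Pe (Pe (V 4) (V 7)) (N 0))) (V 9)) (V 8))))))))))"
definition "U2 = BEx 4 (Sc (V 0)) (BEx 5 (Sc (V 0)) (Cj (Eq (V 2) (Sc (Ml (N 2) (Pe (V 5) (V 4))))) (Eq (V 3) (P2 (Sc (Ml (N 2) (Pe (V 4) (V 5))))))))"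
definition "Uf = BEx 2 (Sc (V 0)) (BEx 3 (Sc (V 0)) (Cj (Eq (V 0) (Pe (V 2) (V 3))) (Dj U1 U2)))"

lemma fv_U1: "fv s U1 \<longleftrightarrow> (\<exists>n<s 1. \<exists>i<s 1. \<exists>j<s 1. \<exists>e<s 1. s 2 = 2 * n \<and>
    set_decode (s 3) = (\<lambda>z. 2*z) ` set_decode e \<union> {2 * pe i j + 1} \<and>
    (\<exists>T<s 1. \<exists>y<s 1. closedS (set_decode T) \<and> fact 0 i (Suc (pe (pe n e) 0)) y \<in> set_decode T))"
  unfolding U1_def by (simp add: fv_SE)

lemma fv_U2: "fv s U2 \<longleftrightarrow> (\<exists>i<Suc (s 0). \<exists>j<Suc (s 0). s 2 = 2 * pe j i + 1 \<and> s 3 = sng (2 * pe i j + 1))"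
  unfolding U2_def by (auto simp: sng_def)

lemma fv_Uf: "fv s Uf \<longleftrightarrow> (\<exists>m<Suc (s 0). \<exists>d<Suc (s 0). s 0 = pe m d \<and> (fv (s(2:=m,3:=d)) U1 \<or> fv (s(2:=m,3:=d)) U2))"
  by (simp add: Uf_def)

lemma US_fm: "x \<in> US \<longleftrightarrow> (\<exists>w. fv (s2 x w) Uf)"
proof
  assume "\<exists>w. fv (s2 x w) Uf"
  then obtain w where "fv (s2 x w) Uf" by blast
  then obtain m d where md: "x = pe m d" "fv ((s2 x w)(2 := m, 3 := d)) U1 \<or> fv ((s2 x w)(2 := m, 3 := d)) U2"
    unfolding Uf_def by auto
  from md(2) show "x \<in> US"
  proof
    assume "fv ((s2 x w)(2 := m, 3 := d)) U1"
    then obtain n i j e T y where "m = 2 * n" "set_decode d = (\<lambda>z. 2*z) ` set_decode e \<union> {2 * pe i j + 1}"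
      "closedS (set_decode T)" "fact 0 i (Suc (pe (pe n e) 0)) y \<in> set_decode T"
      unfolding fv_U1 by auto
    then show "x \<in> US" unfolding US_def using md(1) W_certT by blast
  next
    assume "fv ((s2 x w)(2 := m, 3 := d)) U2"
    then show "x \<in> US" unfolding fv_U2 US_def using md(1) by auto
  qed
next
  assume "x \<in> US"
  then consider (a) n d i j e where "x = pe (2*n) d" "pe n e \<in> W i" "set_decode d = (\<lambda>z. 2*z) ` set_decode e \<union> {2 * pe i j + 1}"
    | (b) i j where "x = pe (2 * pe j i + 1) (sng (2 * pe i j + 1))"
    unfolding US_def by blast
  then show "\<exists>w. fv (s2 x w) Uf"
  proof cases
    case a
    obtain T y where Ty: "closedS (set_decode T)" "fact 0 i (Suc (pe (pe n e) 0)) y \<in> set_decode T"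
      using a(2) W_certT by blast
    let ?w = "Suc (n + i + j + e + T + y)"
    have "fv ((s2 x ?w)(2 := 2*n, 3 := d)) U1" unfolding fv_U1 using a(3) Ty
      by simp (intro exI conjI; (rule refl)?; (simp; fail)?; linarith?) 
    moreover have "2*n \<le> x" "d \<le> x" using a(1) pe_le1[of "2*n" d] pe_le2[of d "2*n"] by simp_all
    then have "2*n < Suc x" "d < Suc x" by simp_all
    ultimately have "fv (s2 x ?w) Uf" unfolding fv_Uf using a(1) by auto
    then show ?thesis by blast
  next
    case b
    have "pe j i \<le> x" using b pe_le1[of "2*pe j i + 1" "sng (2 * pe i j + 1)"] by simp
    then have "i < Suc x" "j < Suc x" using pe_le1[of j i] pe_le2[of i j] pe_le1[of i j] pe_le2[of j i] by linarith+
    then have "fv ((s2 x 0)(2 := 2 * pe j i + 1, 3 := sng (2 * pe i j + 1))) U2" unfolding fv_U2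
      by auto
    moreover have "2 * pe j i + 1 < Suc x" "sng (2 * pe i j + 1) < Suc x"
      using b pe_le1[of "2*pe j i + 1" "sng (2 * pe i j + 1)"] pe_le2[of "sng (2 * pe i j + 1)" "2*pe j i + 1"] by linarith+
    ultimately have "fv (s2 x 0) Uf" unfolding fv_Uf s2_simps using b by blast
    then show ?thesis by blast
  qed
qed

lemma Gamma_iff: "n \<in> Gamma i A \<longleftrightarrow> (\<exists>d. pe n d \<in> W i \<and> set_decode d \<subseteq> A)"
  by (simp add: Gamma_def pair_def)

primrec itG :: "(nat \<Rightarrow> nat) \<Rightarrow> nat \<Rightarrow> nat set \<Rightarrow> nat set" where
  "itG ks 0 Y = Y"
| "itG ks (Suc n) Y = Gamma (ks n) (itG ks n Y)"

lemma Gamma_mono: "Y \<subseteq> Y2 \<Longrightarrow> Gamma i Y \<subseteq> Gamma i Y2"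
  unfolding Gamma_def by blast

lemma itG_mono: "Y \<subseteq> Y2 \<Longrightarrow> itG ks L Y \<subseteq> itG ks L Y2"
  by (induction L) (auto dest: Gamma_mono[of _ _ "ks _"])

lemma itG_compact: "n \<in> itG ks L Y \<Longrightarrow> \<exists>d. set_decode d \<subseteq> Y \<and> n \<in> itG ks L (set_decode d)"
proof (induction L arbitrary: n)
  case 0
  then show ?case by (intro exI[where x="sng n"]) simp
next
  case (Suc L)
  then obtain e where e: "pe n e \<in> W (ks L)" "set_decode e \<subseteq> itG ks L Y"
    unfolding itG.simps Gamma_iff by blast
  have "\<forall>z\<in>set_decode e. \<exists>d. set_decode d \<subseteq> Y \<and> z \<in> itG ks L (set_decode d)"
    using e(2) Suc.IH by blast
  then obtain dz where dz: "\<And>z. z \<in> set_decode e \<Longrightarrow> set_decode (dz z) \<subseteq> Y \<and> z \<in> itG ks L (set_decode (dz z))"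
    by metis
  let ?D = "\<Union>z\<in>set_decode e. set_decode (dz z)"
  have fin: "finite ?D" by simp
  have "set_decode e \<subseteq> itG ks L ?D"
  proof
    fix z assume z: "z \<in> set_decode e"
    have "set_decode (dz z) \<subseteq> ?D" using z by blast
    then show "z \<in> itG ks L ?D" using itG_mono dz[OF z] by blast
  qed
  then have "n \<in> itG ks (Suc L) ?D" using e(1) unfolding itG.simps Gamma_iff by blast
  moreover have "?D \<subseteq> Y" using dz by blast
  moreover have eq: "set_decode (set_encode ?D) = ?D" using fin by (rule set_encode_inverse)
  ultimately have "set_decode (set_encode ?D) \<subseteq> Y \<and> n \<in> itG ks (Suc L) (set_decode (set_encode ?D))"
    by (simp only: eq)
  then show ?case by (rule exI)
qed

lemma Gamma_op:
  assumes "W k = {x. \<exists>n d. x = pe n d \<and> n \<in> itG ks L (set_decode d)}"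
  shows "Gamma k Y = itG ks L Y"
proof -
  have m: "pe n d \<in> W k \<longleftrightarrow> n \<in> itG ks L (set_decode d)" for n d using assms by auto
  have "Gamma k Y = {n. \<exists>d. n \<in> itG ks L (set_decode d) \<and> set_decode d \<subseteq> Y}"
    unfolding Gamma_def pair_def m ..
  also have "\<dots> = itG ks L Y"
  proof
    show "{n. \<exists>d. n \<in> itG ks L (set_decode d) \<and> set_decode d \<subseteq> Y} \<subseteq> itG ks L Y"
    proof
      fix n assume "n \<in> {n. \<exists>d. n \<in> itG ks L (set_decode d) \<and> set_decode d \<subseteq> Y}"
      then obtain d where "n \<in> itG ks L (set_decode d)" "set_decode d \<subseteq> Y" by blast
      then show "n \<in> itG ks L Y" using itG_mono[of "set_decode d" Y ks L] by blast
    qed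
    show "itG ks L Y \<subseteq> {n. \<exists>d. n \<in> itG ks L (set_decode d) \<and> set_decode d \<subseteq> Y}"
      using itG_compact by blast
  qed
  finally show ?thesis .
qed

lemma fact_W: "closedS X \<Longrightarrow> fact 0 i (Suc (pe x 0)) y \<in> X \<Longrightarrow> x \<in> W i"
  using sound01[of X i] W_code by fastforce

definition good :: "(nat \<Rightarrow> nat) \<Rightarrow> nat \<Rightarrow> nat set \<Rightarrow> nat set \<Rightarrow> nat \<Rightarrow> bool" where
  "good ks d Q X p \<longleftrightarrow> (\<exists>t x. p = pe t x \<and> (t = 0 \<longrightarrow> x \<in> set_decode d) \<and>
     (t \<noteq> 0 \<longrightarrow> (\<exists>e. (\<forall>z\<in>set_decode e. pe (t-1) z \<in> Q) \<and> (\<exists>y. fact 0 (ks (t-1)) (Suc (pe (pe x e) 0)) y \<in> X))))"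

lemma good_mono: "good ks d Q X p \<Longrightarrow> Q \<subseteq> Q' \<Longrightarrow> X \<subseteq> X' \<Longrightarrow> good ks d Q' X' p"
  unfolding good_def by blast

lemma chain_sound:
  assumes "closedS X" "\<forall>p\<in>Q. good ks d Q X p"
  shows "pe t x \<in> Q \<Longrightarrow> x \<in> itG ks t (set_decode d)"
proof (induction t arbitrary: x)
  case 0
  then show ?case using assms(2) unfolding good_def by fastforce
next
  case (Suc t)
  then obtain e y where e: "\<forall>z\<in>set_decode e. pe t z \<in> Q" "fact 0 (ks t) (Suc (pe (pe x e) 0)) y \<in> X"
    using assms(2) unfolding good_def by fastforce
  have "pe x e \<in> W (ks t)" using fact_W[OF assms(1) e(2)] .
  moreover have "set_decode e \<subseteq> itG ks t (set_decode d)" using e(1) Suc.IH by blast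
  ultimately show ?case unfolding itG.simps Gamma_iff by blast
qed

lemma chain_complete:
  "x \<in> itG ks t (set_decode d) \<Longrightarrow> \<exists>Q X. finite Q \<and> cert X \<and> (\<forall>p\<in>Q. good ks d Q X p) \<and> pe t x \<in> Q"
proof (induction t arbitrary: x)
  case 0
  have "good ks d {pe 0 x} {} (pe 0 x)" using 0 unfolding good_def by auto
  then show ?case using cert_empty by (intro exI[where x="{pe 0 x}"] exI[where x="{}"]) auto
next
  case (Suc t)
  then obtain e where e: "pe x e \<in> W (ks t)" "set_decode e \<subseteq> itG ks t (set_decode d)"
    unfolding itG.simps Gamma_iff by blast
  obtain X0 y where X0: "cert X0" "fact 0 (ks t) (list_encode [pe x e]) y \<in> X0" using e(1) W_cert by blast
  have "\<forall>z\<in>set_decode e. \<exists>Q X. finite Q \<and> cert X \<and> (\<forall>p\<in>Q. good ks d Q X p) \<and> pe t z \<in> Q"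
    using e(2) Suc.IH by blast
  then obtain QF XF where F: "\<And>z. z \<in> set_decode e \<Longrightarrow> finite (QF z) \<and> cert (XF z) \<and> (\<forall>p\<in>QF z. good ks d (QF z) (XF z) p) \<and> pe t z \<in> QF z"
    by metis
  define Q where "Q = insert (pe (Suc t) x) (\<Union>z\<in>set_decode e. QF z)"
  define X where "X = X0 \<union> (\<Union>z\<in>set_decode e. XF z)"
  have cX: "cert X" unfolding X_def using X0(1) F by (intro cert_Un cert_UN) auto
  have fQ: "finite Q" unfolding Q_def using F by auto
  have sub: "QF z \<subseteq> Q" "XF z \<subseteq> X" if "z \<in> set_decode e" for z
    unfolding Q_def X_def using that by blast+
  have "good ks d Q X p" if p: "p \<in> Q" for p
  proof (cases "p = pe (Suc t) x")
    case True
    have a: "\<forall>z\<in>set_decode e. pe t z \<in> Q" using F sub by blast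
    have b: "fact 0 (ks t) (Suc (pe (pe x e) 0)) y \<in> X" using X0(2) unfolding X_def by simp
    have "\<exists>e. (\<forall>z\<in>set_decode e. pe (Suc t - 1) z \<in> Q) \<and> (\<exists>y. fact 0 (ks (Suc t - 1)) (Suc (pe (pe x e) 0)) y \<in> X)"
      using a b by (simp only: diff_Suc_1) blast
    then show ?thesis unfolding good_def True by blast
  next
    case False
    then obtain z where z: "z \<in> set_decode e" "p \<in> QF z" using p unfolding Q_def by blast
    then have "good ks d (QF z) (XF z) p" using F by blast
    then show ?thesis by (rule good_mono) (use z sub in auto)
  qed
  moreover have "pe (Suc t) x \<in> Q" unfolding Q_def by simp
  ultimately show ?case using cX fQ by blast
qed

definition kseq :: "nat \<Rightarrow> nat \<Rightarrow> nat \<Rightarrow> nat \<Rightarrow> nat \<Rightarrow> nat \<Rightarrow> nat \<Rightarrow> nat \<Rightarrow> nat" where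
  "kseq a0 a1 a2 b1 b0 c c' t = (if t = 0 then a0 else if t \<le> c then a1 else if t = Suc c then a2
      else if t \<le> c + c' + 1 then b1 else b0)"

definition "mmf k = memf (fct (N 0) (N k) (Sc (Pe (Pe (V 10) (V 12)) (N 0))) (V 14)) (V 7)"

definition "KM a0 a1 a2 b1 b0 = Dj (Cj (Eq (V 11) (N 0)) (mmf a0))
  (Dj (Cj (Lt (N 0) (V 11)) (Cj (Lt (V 11) (Sc (V 2))) (mmf a1)))
  (Dj (Cj (Eq (V 11) (Sc (V 2))) (mmf a2))
  (Dj (Cj (Lt (Sc (V 2)) (V 11)) (Cj (Lt (V 11) (Sc (Sc (Pl (V 2) (V 3))))) (mmf b1)))
      (Cj (Neg (Lt (V 11) (Sc (Sc (Pl (V 2) (V 3)))))) (mmf b0)))))"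

lemma fv_mmf: "fv s (mmf k) \<longleftrightarrow> fact 0 k (Suc (pe (pe (s 10) (s 12)) 0)) (s 14) \<in> set_decode (s 7)"
  unfolding mmf_def by simp

lemma kseq_cases: "(t = 0 \<and> P a0) \<or> (0 < t \<and> t < Suc c \<and> P a1) \<or> (t = Suc c \<and> P a2) \<or>
   (Suc c < t \<and> t < Suc (Suc (c + c')) \<and> P b1) \<or> (\<not> t < Suc (Suc (c + c')) \<and> P b0) \<longleftrightarrow> P (kseq a0 a1 a2 b1 b0 c c' t)"
  unfolding kseq_def by auto

lemma fv_KM: "fv s (KM a0 a1 a2 b1 b0) \<longleftrightarrow>
   fact 0 (kseq a0 a1 a2 b1 b0 (s 2) (s 3) (s 11)) (Suc (pe (pe (s 10) (s 12)) 0)) (s 14) \<in> set_decode (s 7)"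
  unfolding KM_def fv.simps tv.simps fv_mmf by (rule kseq_cases)

definition "GB a0 a1 a2 b1 b0 = BEx 9 (Sc (V 8)) (BEx 10 (Sc (V 8)) (Cj (Eq (V 8) (Pe (V 9) (V 10)))
   (Dj (Cj (Eq (V 9) (N 0)) (memf (V 10) (V 5)))
       (BEx 11 (V 9) (Cj (Eq (V 9) (Sc (V 11))) (BEx 12 (V 1) (Cj (All 13 (V 12) (Imp (memf (V 13) (V 12)) (memf (Pe (V 11) (V 13)) (V 6))))
          (BEx 14 (V 1) (KM a0 a1 a2 b1 b0)))))))))"

definition GBsem :: "(nat \<Rightarrow> nat) \<Rightarrow> nat \<Rightarrow> nat \<Rightarrow> nat \<Rightarrow> nat \<Rightarrow> nat \<Rightarrow> bool" where
  "GBsem ks d Q T w p \<longleftrightarrow> (\<exists>t<Suc p. \<exists>x<Suc p. p = pe t x \<and> ((t = 0 \<and> x \<in> set_decode d) \<or>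
     (\<exists>t'<t. t = Suc t' \<and> (\<exists>e<w. (\<forall>z<e. z \<in> set_decode e \<longrightarrow> pe t' z \<in> set_decode Q) \<and>
        (\<exists>y<w. fact 0 (ks t') (Suc (pe (pe x e) 0)) y \<in> set_decode T)))))"

lemma fv_GB: "fv s (GB a0 a1 a2 b1 b0) \<longleftrightarrow> GBsem (kseq a0 a1 a2 b1 b0 (s 2) (s 3)) (s 5) (s 6) (s 7) (s 1) (s 8)"
  unfolding GB_def GBsem_def by (simp add: fv_KM)

lemma GBsem_mono: "GBsem ks d Q T w p \<Longrightarrow> w \<le> w' \<Longrightarrow> GBsem ks d Q T w' p"
proof -
  assume G: "GBsem ks d Q T w p" and ww: "w \<le> w'"
  then obtain t x where tx: "t < Suc p" "x < Suc p" "p = pe t x" "(t = 0 \<and> x \<in> set_decode d) \<or>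
     (\<exists>t'<t. t = Suc t' \<and> (\<exists>e<w. (\<forall>z<e. z \<in> set_decode e \<longrightarrow> pe t' z \<in> set_decode Q) \<and>
        (\<exists>y<w. fact 0 (ks t') (Suc (pe (pe x e) 0)) y \<in> set_decode T)))"
    unfolding GBsem_def by blast
  from tx(4) show ?thesis
  proof
    assume "t = 0 \<and> x \<in> set_decode d"
    then show ?thesis unfolding GBsem_def using tx(1-3) by blast
  next
    assume "\<exists>t'<t. t = Suc t' \<and> (\<exists>e<w. (\<forall>z<e. z \<in> set_decode e \<longrightarrow> pe t' z \<in> set_decode Q) \<and>
        (\<exists>y<w. fact 0 (ks t') (Suc (pe (pe x e) 0)) y \<in> set_decode T))"
    then obtain t' e y where h: "t' < t" "t = Suc t'" "e < w" "\<forall>z<e. z \<in> set_decode e \<longrightarrow> pe t' z \<in> set_decode Q"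
      "y < w" "fact 0 (ks t') (Suc (pe (pe x e) 0)) y \<in> set_decode T" by blast
    have "e < w'" "y < w'" using h(3,5) ww by simp_all
    then have "\<exists>t'<t. t = Suc t' \<and> (\<exists>e<w'. (\<forall>z<e. z \<in> set_decode e \<longrightarrow> pe t' z \<in> set_decode Q) \<and>
        (\<exists>y<w'. fact 0 (ks t') (Suc (pe (pe x e) 0)) y \<in> set_decode T))" using h by blast
    then show ?thesis unfolding GBsem_def using tx(1-3) by blast
  qed
qed

lemma GBsem_good: "GBsem ks d Q T w p \<Longrightarrow> good ks d (set_decode Q) (set_decode T) p"
proof -
  assume "GBsem ks d Q T w p"
  then obtain t x where tx: "p = pe t x" "(t = 0 \<and> x \<in> set_decode d) \<or>
     (\<exists>t'<t. t = Suc t' \<and> (\<exists>e<w. (\<forall>z<e. z \<in> set_decode e \<longrightarrow> pe t' z \<in> set_decode Q) \<and>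
        (\<exists>y<w. fact 0 (ks t') (Suc (pe (pe x e) 0)) y \<in> set_decode T)))"
    unfolding GBsem_def by blast
  from tx(2) show ?thesis
  proof
    assume "t = 0 \<and> x \<in> set_decode d"
    then show ?thesis unfolding good_def using tx(1) by blast
  next
    assume "\<exists>t'<t. t = Suc t' \<and> (\<exists>e<w. (\<forall>z<e. z \<in> set_decode e \<longrightarrow> pe t' z \<in> set_decode Q) \<and>
        (\<exists>y<w. fact 0 (ks t') (Suc (pe (pe x e) 0)) y \<in> set_decode T))"
    then obtain t' e y where h: "t = Suc t'" "\<forall>z<e. z \<in> set_decode e \<longrightarrow> pe t' z \<in> set_decode Q"
      "fact 0 (ks t') (Suc (pe (pe x e) 0)) y \<in> set_decode T" by blast
    have "\<forall>z\<in>set_decode e. pe (t-1) z \<in> set_decode Q" using h(1,2) mem_lt by simp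
    moreover have "fact 0 (ks (t-1)) (Suc (pe (pe x e) 0)) y \<in> set_decode T" using h(1,3) by simp
    ultimately show ?thesis unfolding good_def using tx(1) h(1) by blast
  qed
qed

lemma good_GBsem: "good ks d (set_decode Q) (set_decode T) p \<Longrightarrow> \<exists>w. GBsem ks d Q T w p"
proof -
  assume "good ks d (set_decode Q) (set_decode T) p"
  then obtain t x where tx: "p = pe t x" "t = 0 \<longrightarrow> x \<in> set_decode d"
     "t \<noteq> 0 \<longrightarrow> (\<exists>e. (\<forall>z\<in>set_decode e. pe (t-1) z \<in> set_decode Q) \<and> (\<exists>y. fact 0 (ks (t-1)) (Suc (pe (pe x e) 0)) y \<in> set_decode T))"
    unfolding good_def by blast
  have b: "t < Suc p" "x < Suc p" using tx(1) pe_le1[of t x] pe_le2[of x t] by linarith+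
  show ?thesis
  proof (cases t)
    case 0
    then show ?thesis unfolding GBsem_def using tx b by blast
  next
    case (Suc t')
    then obtain e y where ey: "\<forall>z\<in>set_decode e. pe t' z \<in> set_decode Q" "fact 0 (ks t') (Suc (pe (pe x e) 0)) y \<in> set_decode T"
      using tx(3) by auto
    have E: "\<forall>z<e. z \<in> set_decode e \<longrightarrow> pe t' z \<in> set_decode Q" using ey(1) Suc by simp
    have "e < Suc (e+y)" "y < Suc (e+y)" by simp_all
    then have "\<exists>e'<Suc (e+y). (\<forall>z<e'. z \<in> set_decode e' \<longrightarrow> pe t' z \<in> set_decode Q) \<and>
        (\<exists>y'<Suc (e+y). fact 0 (ks t') (Suc (pe (pe x e') 0)) y' \<in> set_decode T)" using E ey(2) by blast
    then have "\<exists>t''<t. t = Suc t'' \<and> (\<exists>e'<Suc (e+y). (\<forall>z<e'. z \<in> set_decode e' \<longrightarrow> pe t'' z \<in> set_decode Q) \<and>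
        (\<exists>y'<Suc (e+y). fact 0 (ks t'') (Suc (pe (pe x e') 0)) y' \<in> set_decode T))" using Suc by blast
    then have "GBsem ks d Q T (Suc (e + y)) p" unfolding GBsem_def using tx(1) b by blast
    then show ?thesis by blast
  qed
qed

lemma finite_bound:
  assumes "finite A" "\<forall>p\<in>A. \<exists>w::nat. P w p" "\<And>w w' p. P w p \<Longrightarrow> w \<le> w' \<Longrightarrow> P w' p"
  shows "\<exists>w. \<forall>p\<in>A. P w p"
  using assms(1,2)
proof (induction A rule: finite_induct)
  case empty then show ?case by blast
next
  case (insert a A)
  then obtain w1 where w1: "\<forall>p\<in>A. P w1 p" by blast
  obtain w2 where w2: "P w2 a" using insert.prems by blast
  have "P (max w1 w2) a" using assms(3)[OF w2, of "max w1 w2"] by (metis max.cobounded2)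
  moreover have "\<forall>p\<in>A. P (max w1 w2) p" using assms(3) w1 by (meson max.cobounded1)
  ultimately have "\<forall>p\<in>insert a A. P (max w1 w2) p" by blast
  then show ?case by blast
qed

definition "Mf a0 a1 a2 b1 b0 = BEx 2 (Sc (V 0)) (BEx 3 (Sc (V 0)) (BEx 4 (Sc (V 0)) (BEx 5 (Sc (V 0))
   (Cj (Eq (V 0) (Pe (V 2) (Pe (V 3) (Pe (V 4) (V 5)))))
     (BEx 6 (V 1) (BEx 7 (V 1) (Cj (CLf 7) (Cj (memf (Pe (Pl (Pl (V 2) (V 3)) (N 3)) (V 4)) (V 6))
        (All 8 (V 6) (Imp (memf (V 8) (V 6)) (GB a0 a1 a2 b1 b0)))))))))))"

lemma fv_Mf: "fv (s2 x w) (Mf a0 a1 a2 b1 b0) \<longleftrightarrow> (\<exists>c<Suc x. \<exists>c'<Suc x. \<exists>n<Suc x. \<exists>d<Suc x. x = pe c (pe c' (pe n d)) \<and>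
   (\<exists>Q<w. \<exists>T<w. closedS (set_decode T) \<and> pe (c + c' + 3) n \<in> set_decode Q \<and>
      (\<forall>p<Q. p \<in> set_decode Q \<longrightarrow> GBsem (kseq a0 a1 a2 b1 b0 c c') d Q T w p)))"
  unfolding Mf_def by (simp add: fv_GB)

definition "MS a0 a1 a2 b1 b0 = {x. \<exists>c c' n d. x = pe c (pe c' (pe n d)) \<and>
   n \<in> itG (kseq a0 a1 a2 b1 b0 c c') (c + c' + 3) (set_decode d)}"

lemma MS_fm: "x \<in> MS a0 a1 a2 b1 b0 \<longleftrightarrow> (\<exists>w. fv (s2 x w) (Mf a0 a1 a2 b1 b0))"
proof
  assume "\<exists>w. fv (s2 x w) (Mf a0 a1 a2 b1 b0)"
  then obtain w c c' n d Q T where h: "x = pe c (pe c' (pe n d))" "closedS (set_decode T)" "pe (c + c' + 3) n \<in> set_decode Q"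
    "\<forall>p<Q. p \<in> set_decode Q \<longrightarrow> GBsem (kseq a0 a1 a2 b1 b0 c c') d Q T w p"
    unfolding fv_Mf by blast
  have "\<forall>p\<in>set_decode Q. good (kseq a0 a1 a2 b1 b0 c c') d (set_decode Q) (set_decode T) p"
    using h(4) mem_lt GBsem_good by blast
  then have "n \<in> itG (kseq a0 a1 a2 b1 b0 c c') (c + c' + 3) (set_decode d)"
    using chain_sound[OF h(2)] h(3) by blast
  then show "x \<in> MS a0 a1 a2 b1 b0" unfolding MS_def using h(1) by blast
next
  assume "x \<in> MS a0 a1 a2 b1 b0"
  then obtain c c' n d where h: "x = pe c (pe c' (pe n d))" "n \<in> itG (kseq a0 a1 a2 b1 b0 c c') (c + c' + 3) (set_decode d)"
    unfolding MS_def by blast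
  let ?ks = "kseq a0 a1 a2 b1 b0 c c'"
  obtain Qs Xs where q: "finite Qs" "cert Xs" "\<forall>p\<in>Qs. good ?ks d Qs Xs p" "pe (c + c' + 3) n \<in> Qs"
    using chain_complete[OF h(2)] by blast
  define Q where "Q = set_encode Qs"
  define T where "T = set_encode Xs"
  have sQ: "set_decode Q = Qs" using q(1) unfolding Q_def by simp
  have sT: "set_decode T = Xs" using q(2) unfolding T_def cert_def by simp
  have "\<forall>p\<in>Qs. \<exists>w. GBsem ?ks d Q T w p" using q(3) good_GBsem sQ sT by metis
  then obtain w0 where w0: "\<forall>p\<in>Qs. GBsem ?ks d Q T w0 p"
    using finite_bound[OF q(1), of "\<lambda>w p. GBsem ?ks d Q T w p"] GBsem_mono by blast
  let ?w = "Suc (w0 + Q + T)"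
  have "\<forall>p\<in>Qs. GBsem ?ks d Q T ?w p" using w0 GBsem_mono by (metis le_add1 le_SucI)
  moreover have "closedS (set_decode T)" using q(2) sT by (simp add: cert_def)
  moreover have "c < Suc x" "c' < Suc x" "n < Suc x" "d < Suc x"
    using h(1) pe_le1[of c "pe c' (pe n d)"] pe_le2[of "pe c' (pe n d)" c] pe_le1[of c' "pe n d"] pe_le2[of "pe n d" c'] pe_le1[of n d] pe_le2[of d n]
    by linarith+
  moreover have "Q < ?w" "T < ?w" by simp_all
  moreover have "\<forall>p<Q. p \<in> set_decode Q \<longrightarrow> GBsem ?ks d Q T ?w p" using calculation(1) sQ by blast
  moreover have "pe (c + c' + 3) n \<in> set_decode Q" using q(4) sQ by simp
  ultimately have "fv (s2 x ?w) (Mf a0 a1 a2 b1 b0)" unfolding fv_Mf using h(1) by blast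
  then show "\<exists>w. fv (s2 x w) (Mf a0 a1 a2 b1 b0)" by blast
qed

definition Gp :: "nat \<Rightarrow> nat \<Rightarrow> recf" where "Gp c c' = Cn PE [cst c, Cn PE [cst c', Id 0]]"

lemma eval_Gp: "eval (Gp c c') [x] (pe c (pe c' x))"
  unfolding Gp_def by (intro eval_Cn2 eval_cst eval_IdI eval_PEI) (auto simp: arg_def intro: eval_cst)

lemma W_Cn_Gp:
  "W (code (Cn r [Gp c c'])) = {x. \<exists>y. eval r [pe c (pe c' x)] y}"
proof -
  have "(\<exists>y. eval (Cn r [Gp c c']) [x] y) \<longleftrightarrow> (\<exists>y. eval r [pe c (pe c' x)] y)" for x
  proof
    assume "\<exists>y. eval (Cn r [Gp c c']) [x] y"
    then obtain y ys where "length ys = 1" "eval (Gp c c') [x] (ys ! 0)" "eval r ys y"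
      by (auto elim: eval.cases)
    moreover then have "ys = [ys ! 0]" by (cases ys) auto
    ultimately show "\<exists>y. eval r [pe c (pe c' x)] y" using eval_det[OF eval_Gp] by metis
  next
    assume "\<exists>y. eval r [pe c (pe c' x)] y"
    then show "\<exists>y. eval (Cn r [Gp c c']) [x] y" using eval_Cn1[OF eval_Gp] by blast
  qed
  then show ?thesis unfolding W_code by blast
qed

definition "tT rc a b = Pe (N 3) (Pe (N rc) (Sc (Pe
   (Pe (N 3) (Pe (N (code PE)) (Sc (Pe (CC a) (Sc (Pe
       (Pe (N 3) (Pe (N (code PE)) (Sc (Pe (CC b) (Sc (Pe (Pe (N 2) (N 0)) (N 0)))))))
     (N 0)))))))
  (N 0))))"

lemma tv_tT: "tv s (tT (code r) a b) = code (Cn r [Gp (tv s a) (tv s b)])"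
  unfolding tT_def Gp_def by simp

definition sw :: "nat \<Rightarrow> nat" where "sw p = pe (snd (prod_decode p)) (fst (prod_decode p))"

lemma sw_pe[simp]: "sw (pe i j) = pe j i" by (simp add: sw_def)

definition "uf rc = BEx 2 (Sc (V 0)) (BEx 3 (Sc (V 0)) (Cj (Eq (V 0) (Pe (V 2) (V 3)))
   (Eq (V 1) (Pe (tT rc (V 0) (Pe (V 3) (V 2))) (tT rc (Pe (V 3) (V 2)) (V 0))))))"

lemma comp_u:
  "computable (\<lambda>p. pe (code (Cn r [Gp p (sw p)])) (code (Cn r [Gp (sw p) p])))"
proof (rule comp_fm[where p="uf (code r)"])
  fix x y
  obtain i j where x: "x = pe i j" by (metis prod_decode_inverse surj_pair)
  have b: "i < Suc x" "j < Suc x" using x pe_le1[of i j] pe_le2[of j i] by linarith+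
  have "fv (s2 x y) (uf (code r)) \<longleftrightarrow> (\<exists>i'<Suc x. \<exists>j'<Suc x. x = pe i' j' \<and>
      y = pe (code (Cn r [Gp x (pe j' i')])) (code (Cn r [Gp (pe j' i') x])))"
    unfolding uf_def by (simp add: tv_tT)
  also have "\<dots> \<longleftrightarrow> y = pe (code (Cn r [Gp x (sw x)])) (code (Cn r [Gp (sw x) x]))"
    using x b by auto
  finally show "fv (s2 x y) (uf (code r)) \<longleftrightarrow> y = pe (code (Cn r [Gp x (sw x)])) (code (Cn r [Gp (sw x) x]))" .
qed

lemma W_P_MS:
  assumes "W (code r) = MS a0 a1 a2 b1 b0"
  shows "Gamma (code (Cn r [Gp c c'])) Y = itG (kseq a0 a1 a2 b1 b0 c c') (c + c' + 3) Y"
proof (rule Gamma_op)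
  have "W (code (Cn r [Gp c c'])) = {x. pe c (pe c' x) \<in> MS a0 a1 a2 b1 b0}"
    unfolding W_Cn_Gp using assms W_code by blast
  also have "\<dots> = {x. \<exists>n d. x = pe n d \<and> n \<in> itG (kseq a0 a1 a2 b1 b0 c c') (c + c' + 3) (set_decode d)}"
  proof -
    have "pe c (pe c' x) \<in> MS a0 a1 a2 b1 b0 \<longleftrightarrow> (\<exists>n d. x = pe n d \<and> n \<in> itG (kseq a0 a1 a2 b1 b0 c c') (c + c' + 3) (set_decode d))" for x
      unfolding MS_def by auto
    then show ?thesis by blast
  qed
  finally show "W (code (Cn r [Gp c c'])) = {x. \<exists>n d. x = pe n d \<and> n \<in> itG (kseq a0 a1 a2 b1 b0 c c') (c + c' + 3) (set_decode d)}" .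
qed

lemma via_pair: "e_equiv_via A B (pair i j) \<longleftrightarrow> Gamma i A = B \<and> Gamma j B = A"
  by (simp add: e_equiv_via_def pair_def)

theorem lemma4p2:
  fixes X :: "nat set set" and f :: "nat set \<Rightarrow> nat set"
  assumes "closed_under_e_equiv X"
    and "uniformly_e_invariant X f"
  shows "\<exists>u. computable u \<and> uniformity_function X f u"
proof -
  obtain u where u: "uniformity_function X f u" using assms(2) unfolding uniformly_e_invariant_def by blast
  have uu: "\<And>A B i j. A \<in> X \<Longrightarrow> B \<in> X \<Longrightarrow> Gamma i A = B \<Longrightarrow> Gamma j B = A \<Longrightarrow>
      Gamma (fst (prod_decode (u (pair i j)))) (f A) = f B \<and> Gamma (snd (prod_decode (u (pair i j)))) (f B) = f A"
  proof -
    fix A B i j assume h: "A \<in> X" "B \<in> X" "Gamma i A = B" "Gamma j B = A"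
    then have "e_equiv_via A B (pair i j)" by (simp add: via_pair)
    then have "e_equiv_via (f A) (f B) (u (pair i j))" using u h(1,2) unfolding uniformity_function_def by blast
    then show "Gamma (fst (prod_decode (u (pair i j)))) (f A) = f B \<and> Gamma (snd (prod_decode (u (pair i j)))) (f B) = f A"
      by (simp add: e_equiv_via_def)
  qed
  obtain iE where iE: "W iE = ES" using ce_fm ES_fm by metis
  have "\<exists>i. W i = padS m" for m using ce_fm padS_fm by metis
  then obtain iP where iP: "\<And>m. W (iP m) = padS m" by metis
  obtain iSh where iSh: "W iSh = ShS" using ce_fm ShS_fm by metis
  obtain iShi where iShi: "W iShi = ShiS" using ce_fm ShiS_fm by metis
  obtain iU where iU: "W iU = US" using ce_fm US_fm by metis
  have dX: "dsum A m \<in> X" if "A \<in> X" for A m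
  proof -
    have "e_equiv A (dsum A m)" unfolding e_equiv_def e_reducible_def
      using Gamma_pad[OF iP] Gamma_E[OF iE] by metis
    then show ?thesis using assms(1) that unfolding closed_under_e_equiv_def by blast
  qed
  define a0 where "a0 = fst (prod_decode (u (pair (iP 0) iE)))"
  define b0 where "b0 = snd (prod_decode (u (pair (iP 0) iE)))"
  define a1 where "a1 = fst (prod_decode (u (pair iSh iShi)))"
  define b1 where "b1 = snd (prod_decode (u (pair iSh iShi)))"
  define a2 where "a2 = fst (prod_decode (u (pair iU iU)))"
  have F0: "Gamma a0 (f Y) = f (dsum Y 0)" "Gamma b0 (f (dsum Y 0)) = f Y" if "Y \<in> X" for Y
    using uu[OF that dX[OF that] Gamma_pad[OF iP] Gamma_E[OF iE]] unfolding a0_def b0_def by auto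
  have F1: "Gamma a1 (f (dsum Y m)) = f (dsum Y (Suc m))" "Gamma b1 (f (dsum Y (Suc m))) = f (dsum Y m)" if "Y \<in> X" for Y m
    using uu[OF dX[OF that] dX[OF that] Gamma_Sh[OF iSh] Gamma_Shi[OF iShi]] unfolding a1_def b1_def by auto
  obtain rM where rM: "W (code rM) = MS a0 a1 a2 b1 b0" using ce_fm_prog MS_fm by metis
  define t where "t = (\<lambda>c c'. code (Cn rM [Gp c c']))"
  have key: "Gamma (t (pe i j) (pe j i)) (f A) = f B"
    if AB: "A \<in> X" "B \<in> X" "Gamma i A = B" "Gamma j B = A" for A B i j
  proof -
    let ?c = "pe i j" and ?c' = "pe j i"
    let ?ks = "kseq a0 a1 a2 b1 b0 ?c ?c'"
    have g1: "Gamma iU (dsum A ?c) = dsum B ?c'" using Gamma_U[OF iU] AB(3) by simp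
    have g2: "Gamma iU (dsum B ?c') = dsum A ?c" using Gamma_U[OF iU] AB(4) by simp
    have F2: "Gamma a2 (f (dsum A ?c)) = f (dsum B ?c')"
      using uu[OF dX[OF AB(1)] dX[OF AB(2)] g1 g2] unfolding a2_def by blast
    have s1: "itG ?ks (Suc m) (f A) = f (dsum A m)" if "m \<le> ?c" for m
      using that
    proof (induction m)
      case 0 then show ?case using F0(1)[OF AB(1)] by (simp add: kseq_def)
    next
      case (Suc m)
      have "?ks (Suc m) = a1" using Suc.prems by (simp add: kseq_def)
      then show ?case using Suc F1(1)[OF AB(1)] by simp
    qed
    have s2: "itG ?ks (Suc (Suc ?c)) (f A) = f (dsum B ?c')"
    proof -
      have "?ks (Suc ?c) = a2" by (simp add: kseq_def)
      then show ?thesis using s1[of ?c] F2 by simp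
    qed
    have s3: "itG ?ks (Suc (Suc ?c) + k) (f A) = f (dsum B (?c' - k))" if "k \<le> ?c'" for k
      using that
    proof (induction k)
      case 0 then show ?case using s2 by simp
    next
      case (Suc k)
      have "?ks (Suc (Suc ?c) + k) = b1" using Suc.prems by (simp add: kseq_def)
      moreover have "?c' - k = Suc (?c' - Suc k)" using Suc.prems by simp
      ultimately show ?case using Suc F1(2)[OF AB(2), of "?c' - Suc k"] by simp
    qed
    have "itG ?ks (?c + ?c' + 3) (f A) = f B"
    proof -
      have kb: "?ks (Suc (Suc ?c) + ?c') = b0" by (simp add: kseq_def)
      have eq: "?c + ?c' + 3 = Suc (Suc (Suc ?c) + ?c')" by simp
      have e3: "itG ?ks (Suc (Suc ?c) + ?c') (f A) = f (dsum B 0)" using s3[of ?c'] by simp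
      have "itG ?ks (?c + ?c' + 3) (f A) = Gamma (?ks (Suc (Suc ?c) + ?c')) (itG ?ks (Suc (Suc ?c) + ?c') (f A))"
        unfolding eq itG.simps(2) ..
      also have "\<dots> = Gamma b0 (f (dsum B 0))" by (simp only: kb e3)
      also have "\<dots> = f B" using F0(2)[OF AB(2)] .
      finally show ?thesis .
    qed
    then show ?thesis unfolding t_def W_P_MS[OF rM] .
  qed
  define u' where "u' = (\<lambda>p. pe (t p (sw p)) (t (sw p) p))"
  have "computable u'" unfolding u'_def t_def by (rule comp_u)
  moreover have "uniformity_function X f u'"
    unfolding uniformity_function_def
  proof (intro ballI allI impI)
    fix A B i j assume A: "A \<in> X" and B: "B \<in> X" and e: "e_equiv_via A B (pair i j)"
    then have g: "Gamma i A = B" "Gamma j B = A" by (auto simp: via_pair)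
    have "Gamma (t (pe i j) (pe j i)) (f A) = f B" using key[OF A B g] .
    moreover have "Gamma (t (pe j i) (pe i j)) (f B) = f A" using key[OF B A g(2) g(1)] .
    ultimately show "e_equiv_via (f A) (f B) (u' (pair i j))"
      unfolding e_equiv_via_def u'_def pair_def by simp
  qed
  ultimately show ?thesis by blast
qed

end
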